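(* Let $1\le r\le K\le d$ and let $\bm{A}\in\mathbb{R}^{d\times K}$ have the form $\bm{A}=\begin{bmatrix}\widetilde{\bm{A}}&\bm{0}\\\bm{0}&\bm{0}\end{bmatrix}$, where $\widetilde{\bm{A}}=\operatorname{diag}(a_1,\ldots,a_r)$ with $a_1\ge\cdots\ge a_r>0$. Suppose there are indices $0=s_0<s_1<\cdots<s_p=r$ such that $a_{s_{i-1}+1}=\cdots=a_{s_i}$ for $i=1,\ldots,p$ and $a_{s_1}>a_{s_2}>\cdots>a_{s_p}$; let $h_i=s_i-s_{i-1}$. Let $g(\bm{Q})=\langle\bm{A},\bm{Q}\rangle+\delta_{{\rm St}(d,K)}(\bm{Q})$ and $\mathcal{Q}=\{\bm{Q}\in{\rm St}(d,K):\bm{0}\in\partial g(\bm{Q})\}$. Then $\bm{Q}\in\mathcal{Q}$ if and only if $$\bm{Q}=\begin{bmatrix}\bm{U}\operatorname{diag}(\bm{q})\bm{U}^T&\bm{0}\\\bm{0}&\bm{V}\end{bmatrix},$$ where $\bm{U}=\operatorname{blkdiag}(\bm{U}_1,\ldots,\bm{U}_p)$ with each $\bm{U}_i$ an $h_i\times h_i$ orthogonal matrix, $\bm{q}\in\{\pm1\}^r$, and $\bm{V}\in{\rm St}(d-r,K-r)$.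
   Context: ${\rm St}(m,k)=\{\bm{Q}\in\mathbb{R}^{m\times k}:\bm{Q}^T\bm{Q}=\bm{I}_k\}$; $\langle\bm{A},\bm{B}\rangle=\operatorname{tr}(\bm{A}^T\bm{B})$; $\delta_{\mathcal{S}}$ is the indicator function of $\mathcal{S}$; $\partial$ is the limiting subdifferential. $\operatorname{blkdiag}$ denotes the block diagonal matrix with the given diagonal blocks. The upper-left block of $\bm{Q}$ is $r\times r$. *)

theory Defs
  imports "Jordan_Normal_Form.Matrix" "HOL-Library.Extended_Real"
begin

definition frob_inner :: "real mat \<Rightarrow> real mat \<Rightarrow> real" where
  "frob_inner A B = (\<Sum>i<dim_row A. \<Sum>j<dim_col A. A $$ (i,j) * B $$ (i,j))"

definition frob_norm :: "real mat \<Rightarrow> real" where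
  "frob_norm A = sqrt (frob_inner A A)"

definition stiefel :: "nat \<Rightarrow> nat \<Rightarrow> real mat set" where
  "stiefel m k = {Q \<in> carrier_mat m k. Q\<^sup>T * Q = 1\<^sub>m k}"

definition diagm :: "nat \<Rightarrow> (nat \<Rightarrow> real) \<Rightarrow> real mat" where
  "diagm n a = mat n n (\<lambda>(i,j). if i = j then a i else 0)"

fun blkdiag :: "real mat list \<Rightarrow> real mat" where
  "blkdiag [] = 0\<^sub>m 0 0"
| "blkdiag (M # Ms) = four_block_mat M (0\<^sub>m (dim_row M) (dim_col (blkdiag Ms)))
      (0\<^sub>m (dim_row (blkdiag Ms)) (dim_col M)) (blkdiag Ms)"

definition indicator_fun :: "real mat set \<Rightarrow> real mat \<Rightarrow> ereal" where
  "indicator_fun S X = (if X \<in> S then 0 else \<infinity>)"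

text \<open>Frechet (regular) subdifferential on R^(m x n):
  V is a Frechet subgradient at X iff liminf_{Y\<rightarrow>X} (f Y - f X - <V,Y-X>)/|Y-X| \<ge> 0.\<close>
definition frechet_subdiff :: "nat \<Rightarrow> nat \<Rightarrow> (real mat \<Rightarrow> ereal) \<Rightarrow> real mat \<Rightarrow> real mat set" where
  "frechet_subdiff m n f X = {V \<in> carrier_mat m n.
     X \<in> carrier_mat m n \<and> \<bar>f X\<bar> \<noteq> \<infinity> \<and>
     (\<forall>\<epsilon>>0. \<exists>\<delta>>0. \<forall>Y \<in> carrier_mat m n. frob_norm (Y - X) < \<delta> \<longrightarrow>
        f Y \<ge> ereal (real_of_ereal (f X) + frob_inner V (Y - X) - \<epsilon> * frob_norm (Y - X)))}"

definition limiting_subdiff :: "nat \<Rightarrow> nat \<Rightarrow> (real mat \<Rightarrow> ereal) \<Rightarrow> real mat \<Rightarrow> real mat set" where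
  "limiting_subdiff m n f X = {V \<in> carrier_mat m n.
     X \<in> carrier_mat m n \<and> \<bar>f X\<bar> \<noteq> \<infinity> \<and>
     (\<exists>Xs Vs. (\<forall>k. Xs k \<in> carrier_mat m n \<and> Vs k \<in> frechet_subdiff m n f (Xs k)) \<and>
        (\<lambda>k. frob_norm (Xs k - X)) \<longlonglongrightarrow> 0 \<and>
        (\<lambda>k. f (Xs k)) \<longlonglongrightarrow> f X \<and>
        (\<lambda>k. frob_norm (Vs k - V)) \<longlonglongrightarrow> 0)}"

end

theory Submission
  imports Defs "Jordan_Normal_Form.Determinant"
begin

lemma mult_entry:
  assumes "A \<in> carrier_mat n m" "B \<in> carrier_mat m l" "i < n" "j < l"
  shows "(A * B) $$ (i,j) = (\<Sum>k<m. A $$ (i,k) * B $$ (k,j))"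
  using assms by (simp add: scalar_prod_def atLeast0LessThan)

lemma eig_step:
  fixes B :: "real mat"
  assumes sym: "\<forall>i<n. \<forall>j<n. B$$(i,j) = B$$(j,i)"
    and inv: "\<forall>i<n. \<forall>j<n. (\<Sum>k<n. B$$(i,k)*B$$(k,j)) = (if i=j then 1 else 0)"
  shows "k \<le> n \<Longrightarrow> \<exists>u q. (\<forall>m<k. \<forall>m'<k. (\<Sum>i<n. u m i * u m' i) = (if m=m' then 1 else 0))
     \<and> (\<forall>m<k. (q m = 1 \<or> q m = (-1::real)) \<and> (\<forall>i<n. (\<Sum>j<n. B$$(i,j) * u m j) = q m * u m i))"
proof (induction k)
  case 0
  then show ?case by auto
next
  case (Suc k)
  then have kn: "k < n" by auto
  from Suc obtain u q where
    orth: "\<forall>m<k. \<forall>m'<k. (\<Sum>i<n. u m i * u m' i) = (if m=m' then 1 else (0::real))"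
    and eig: "\<forall>m<k. (q m = 1 \<or> q m = (-1::real)) \<and> (\<forall>i<n. (\<Sum>j<n. B$$(i,j) * u m j) = q m * u m i)"
    by auto
  define x where "x j i = (if i=j then 1 else 0) - (\<Sum>m<k. u m j * u m i)" for j i
  have "\<exists>j<n. \<exists>i<n. x j i \<noteq> 0"
  proof (rule ccontr)
    assume "\<not> ?thesis"
    then have z: "\<And>j. j<n \<Longrightarrow> x j j = 0" by auto
    have "real n = (\<Sum>j<n. (1::real))" by simp
    also have "\<dots> = (\<Sum>j<n. \<Sum>m<k. u m j * u m j)"
      by (rule sum.cong, simp, use z in \<open>auto simp: x_def\<close>)
    also have "\<dots> = (\<Sum>m<k. \<Sum>j<n. u m j * u m j)" by (rule sum.swap)
    also have "\<dots> = (\<Sum>m<k. (1::real))" by (rule sum.cong, simp, use orth in auto)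
    also have "\<dots> = real k" by simp
    finally show False using kn by simp
  qed
  then obtain j0 i0 where j0: "j0 < n" and i0: "i0 < n" and xi0: "x j0 i0 \<noteq> 0" by auto
  define y where "y i = x j0 i" for i
  have yorth: "(\<Sum>i<n. u m' i * y i) = 0" if m': "m' < k" for m'
  proof -
    have "(\<Sum>i<n. u m' i * y i) = (\<Sum>i<n. u m' i * (if i=j0 then 1 else 0)) - (\<Sum>i<n. \<Sum>m<k. u m j0 * (u m' i * u m i))"
      by (simp add: y_def x_def right_diff_distrib sum_subtractf sum_distrib_left mult_ac)
    also have "(\<Sum>i<n. u m' i * (if i=j0 then 1 else 0)) = u m' j0"
      using j0 by (simp add: if_distrib cong: if_cong)
    also have "(\<Sum>i<n. \<Sum>m<k. u m j0 * (u m' i * u m i)) = (\<Sum>m<k. u m j0 * (\<Sum>i<n. u m' i * u m i))"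
      by (subst sum.swap) (simp add: sum_distrib_left)
    also have "\<dots> = (\<Sum>m<k. u m j0 * (if m'=m then 1 else 0))"
      by (rule sum.cong, simp, use orth m' in auto)
    also have "\<dots> = u m' j0" using m' by (simp add: if_distrib cong: if_cong)
    finally show ?thesis by simp
  qed
  define By where "By i = (\<Sum>j<n. B$$(i,j) * y j)" for i
  have Byorth: "(\<Sum>i<n. u m' i * By i) = 0" if m': "m' < k" for m'
  proof -
    have "(\<Sum>i<n. u m' i * By i) = (\<Sum>j<n. y j * (\<Sum>i<n. B$$(j,i) * u m' i))"
      unfolding By_def sum_distrib_left
      by (subst sum.swap, rule sum.cong, simp, rule sum.cong, simp, use sym in \<open>auto simp: mult_ac\<close>)
    also have "\<dots> = (\<Sum>j<n. q m' * (u m' j * y j))"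
      by (rule sum.cong, simp, use eig m' in auto)
    also have "\<dots> = q m' * (\<Sum>j<n. u m' j * y j)" by (simp add: sum_distrib_left)
    finally show ?thesis using yorth[OF m'] by simp
  qed
  have BBy: "(\<Sum>j<n. B$$(i,j) * By j) = y i" if i: "i < n" for i
  proof -
    have "(\<Sum>j<n. B$$(i,j) * By j) = (\<Sum>l<n. (\<Sum>j<n. B$$(i,j) * B$$(j,l)) * y l)"
      unfolding By_def sum_distrib_left sum_distrib_right
      by (subst sum.swap, simp add: mult_ac)
    also have "\<dots> = (\<Sum>l<n. (if i = l then y l else 0))"
      by (rule sum.cong, simp, use inv i in auto)
    also have "\<dots> = y i" using i by simp
    finally show ?thesis .
  qed
  obtain \<sigma> :: real where sig: "\<sigma> = 1 \<or> \<sigma> = -1" and nz: "\<exists>i<n. y i + \<sigma> * By i \<noteq> 0"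
  proof (cases "\<exists>i<n. y i + By i \<noteq> 0")
    case True then show ?thesis using that[of 1] by auto
  next
    case False
    then have "y i0 + By i0 = 0" using i0 by auto
    then have "y i0 + (-1) * By i0 \<noteq> 0" using xi0 by (simp add: y_def)
    then show ?thesis using that[of "-1"] i0 by blast
  qed
  define w where "w i = y i + \<sigma> * By i" for i
  define N where "N = (\<Sum>i<n. w i * w i)"
  have Npos: "N > 0"
  proof -
    from nz obtain i1 where i1: "i1 < n" "w i1 \<noteq> 0" by (auto simp: w_def)
    have "w i1 * w i1 \<le> N" unfolding N_def
      by (rule member_le_sum, use i1 in auto)
    moreover have "w i1 * w i1 > 0" using i1 not_real_square_gt_zero by blast
    ultimately show ?thesis by simp
  qed
  define v where "v i = w i / sqrt N" for i
  have vorth: "(\<Sum>i<n. u m' i * v i) = 0" if "m' < k" for m'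
  proof -
    have "(\<Sum>i<n. u m' i * v i) = (\<Sum>i<n. (u m' i * y i + \<sigma> * (u m' i * By i)) / sqrt N)"
      by (rule sum.cong) (simp_all add: v_def w_def ring_distribs mult_ac)
    also have "\<dots> = ((\<Sum>i<n. u m' i * y i) + \<sigma> * (\<Sum>i<n. u m' i * By i)) / sqrt N"
      by (simp add: sum_divide_distrib[symmetric] sum.distrib sum_distrib_left)
    finally have "(\<Sum>i<n. u m' i * v i) = ((\<Sum>i<n. u m' i * y i) + \<sigma> * (\<Sum>i<n. u m' i * By i)) / sqrt N" .
    then show ?thesis using yorth[OF that] Byorth[OF that] by simp
  qed
  have vnorm: "(\<Sum>i<n. v i * v i) = 1"
  proof -
    have "(\<Sum>i<n. v i * v i) = N / (sqrt N * sqrt N)"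
      by (simp add: v_def N_def sum_divide_distrib)
    then show ?thesis using Npos by simp
  qed
  have veig: "(\<Sum>j<n. B$$(i,j) * v j) = \<sigma> * v i" if i: "i < n" for i
  proof -
    have "(\<Sum>j<n. B$$(i,j) * v j) = (\<Sum>j<n. (B$$(i,j) * y j + \<sigma> * (B$$(i,j) * By j)) / sqrt N)"
      by (rule sum.cong) (simp_all add: v_def w_def ring_distribs mult_ac)
    also have "\<dots> = (By i + \<sigma> * (\<Sum>j<n. B$$(i,j) * By j)) / sqrt N"
      by (simp add: By_def sum_divide_distrib[symmetric] sum.distrib sum_distrib_left)
    also have "\<dots> = (By i + \<sigma> * y i) / sqrt N" using BBy[OF i] by simp
    also have "\<dots> = \<sigma> * v i" using sig by (auto simp: v_def w_def field_simps)
    finally show ?thesis .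
  qed
  define u' where "u' = u(k := v)"
  define q' where "q' = q(k := \<sigma>)"
  show ?case
  proof (intro exI[of _ u'] exI[of _ q'] conjI allI impI)
    fix m m' assume m: "m < Suc k" and m': "m' < Suc k"
    show "(\<Sum>i<n. u' m i * u' m' i) = (if m = m' then 1 else 0)"
    proof (cases "m = k")
      case True
      show ?thesis
      proof (cases "m' = k")
        case True with \<open>m = k\<close> show ?thesis using vnorm by (simp add: u'_def)
      next
        case False
        then have "m' < k" using m' by simp
        then show ?thesis using vorth[of m'] True False by (simp add: u'_def mult.commute)
      qed
    next
      case False
      then have mk: "m < k" using m by simp
      show ?thesis
      proof (cases "m' = k")
        case True
        then show ?thesis using vorth[OF mk] False by (simp add: u'_def)
      next
        case False
        then have "m' < k" using m' by simp
        then show ?thesis using orth mk \<open>m \<noteq> k\<close> False by (simp add: u'_def)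
      qed
    qed
  next
    fix m assume m: "m < Suc k"
    show "q' m = 1 \<or> q' m = -1" using eig sig m by (cases "m = k") (auto simp: q'_def)
  next
    fix m i assume m: "m < Suc k" and i: "i < n"
    show "(\<Sum>j<n. B$$(i,j) * u' m j) = q' m * u' m i"
      using eig veig[OF i] m i by (cases "m = k") (auto simp: q'_def u'_def)
  qed
qed

lemma transpose_entry: "A \<in> carrier_mat n m \<Longrightarrow> i < m \<Longrightarrow> j < n \<Longrightarrow> A\<^sup>T $$ (i,j) = A $$ (j,i)"
  by simp

lemma spectral_invol:
  fixes B :: "real mat"
  assumes B: "B \<in> carrier_mat n n" and symB: "B\<^sup>T = B" and orthB: "B\<^sup>T * B = 1\<^sub>m n"
  shows "\<exists>U q. U \<in> stiefel n n \<and> (\<forall>i<n. q i = 1 \<or> q i = -1) \<and> B = U * diagm n q * U\<^sup>T"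
proof -
  have sym: "\<forall>i<n. \<forall>j<n. B$$(i,j) = B$$(j,i)"
    using symB B by (metis carrier_matD index_transpose_mat(1))
  have inv: "\<forall>i<n. \<forall>j<n. (\<Sum>k<n. B$$(i,k)*B$$(k,j)) = (if i=j then 1 else 0)"
  proof (intro allI impI)
    fix i j assume i: "i < n" and j: "j < n"
    have "(B * B) $$ (i,j) = (\<Sum>k<n. B$$(i,k)*B$$(k,j))" using mult_entry[OF B B i j] .
    moreover have "B * B = 1\<^sub>m n" using orthB symB by simp
    ultimately show "(\<Sum>k<n. B$$(i,k)*B$$(k,j)) = (if i=j then 1 else 0)" using i j by simp
  qed
  obtain u q where
    orth: "\<forall>m<n. \<forall>m'<n. (\<Sum>i<n. u m i * u m' i) = (if m=m' then 1 else (0::real))"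
    and eig: "\<forall>m<n. (q m = 1 \<or> q m = (-1::real)) \<and> (\<forall>i<n. (\<Sum>j<n. B$$(i,j) * u m j) = q m * u m i)"
    using eig_step[OF sym inv, of n] by auto
  define U where "U = mat n n (\<lambda>(i,m). u m i)"
  have U: "U \<in> carrier_mat n n" and Ut: "U\<^sup>T \<in> carrier_mat n n" by (auto simp: U_def)
  have UtU: "U\<^sup>T * U = 1\<^sub>m n"
  proof (rule eq_matI)
    fix i j assume i: "i < dim_row (1\<^sub>m n)" and j: "j < dim_col (1\<^sub>m n)"
    then have i': "i < n" and j': "j < n" by auto
    have "(U\<^sup>T * U) $$ (i,j) = (\<Sum>k<n. U\<^sup>T $$ (i,k) * U $$ (k,j))" using mult_entry[OF Ut U i' j'] .
    also have "\<dots> = (\<Sum>k<n. u i k * u j k)" by (rule sum.cong) (use i' j' in \<open>auto simp: U_def\<close>)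
    also have "\<dots> = 1\<^sub>m n $$ (i,j)" using orth i' j' by simp
    finally show "(U\<^sup>T * U) $$ (i,j) = 1\<^sub>m n $$ (i,j)" .
  qed (auto simp: U_def)
  have UUt: "U * U\<^sup>T = 1\<^sub>m n" using mat_mult_left_right_inverse[OF Ut U UtU] .
  have D: "diagm n q \<in> carrier_mat n n" by (simp add: diagm_def)
  have BU: "B * U = U * diagm n q"
  proof (rule eq_matI)
    fix i j assume i: "i < dim_row (U * diagm n q)" and j: "j < dim_col (U * diagm n q)"
    then have i': "i < n" and j': "j < n" using U D by auto
    have "(B * U) $$ (i,j) = (\<Sum>k<n. B $$ (i,k) * u j k)"
      using mult_entry[OF B U i' j'] i' j' by (simp add: U_def)
    also have "\<dots> = q j * u j i" using eig i' j' by simp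
    also have "\<dots> = (\<Sum>k<n. U $$ (i,k) * diagm n q $$ (k,j))"
      using i' j' by (simp add: U_def diagm_def if_distrib[of "\<lambda>x. _ * x"] cong: if_cong)
    also have "\<dots> = (U * diagm n q) $$ (i,j)" using mult_entry[OF U D i' j'] by simp
    finally show "(B * U) $$ (i,j) = (U * diagm n q) $$ (i,j)" .
  qed (use U D B in auto)
  have "B = B * (U * U\<^sup>T)" using UUt B by simp
  also have "\<dots> = (B * U) * U\<^sup>T" using B U Ut by simp
  also have "\<dots> = U * diagm n q * U\<^sup>T" using BU by simp
  finally have "B = U * diagm n q * U\<^sup>T" .
  moreover have "U \<in> stiefel n n" using U UtU by (simp add: stiefel_def)
  ultimately show ?thesis using eig by blast
qed



lemma mono_chain:
  assumes "\<forall>b<m. t b \<le> t (Suc b)" "b \<le> b'" "b' \<le> m"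
  shows "t b \<le> (t b' :: nat)"
  using assms(2,3)
proof (induction b')
  case 0 then show ?case by simp
next
  case (Suc b')
  show ?case
  proof (cases "b = Suc b'")
    case True then show ?thesis by simp
  next
    case False
    then have "t b \<le> t b'" using Suc by simp
    also have "t b' \<le> t (Suc b')" using assms(1) Suc.prems by simp
    finally show ?thesis .
  qed
qed

lemma blkdiag_entry:
  assumes "\<forall>b<length Ms. Ms!b \<in> carrier_mat (t (Suc b) - t b) (t (Suc b) - t b)"
    "\<forall>b<length Ms. t b \<le> t (Suc b)" "t 0 = 0"
  shows "blkdiag Ms \<in> carrier_mat (t (length Ms)) (t (length Ms)) \<and>
    (\<forall>b<length Ms. \<forall>i j. t b \<le> i \<longrightarrow> i < t (Suc b) \<longrightarrow> j < t (length Ms) \<longrightarrow>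
       blkdiag Ms $$ (i,j) = (if t b \<le> j \<and> j < t (Suc b) then Ms!b $$ (i - t b, j - t b) else 0))"
  using assms
proof (induction Ms arbitrary: t)
  case Nil
  then show ?case by simp
next
  case (Cons M Ms)
  define t' where "t' b = t (Suc b) - t 1" for b
  let ?L = "length Ms"
  have mono: "\<forall>b<Suc ?L. t b \<le> t (Suc b)" using Cons.prems(2) by simp
  have t1le: "t 1 \<le> t (Suc b)" if "b \<le> ?L" for b
    using mono_chain[OF mono, of 1 "Suc b"] that by simp
  have h1: "\<forall>b<?L. Ms!b \<in> carrier_mat (t' (Suc b) - t' b) (t' (Suc b) - t' b)"
  proof (intro allI impI)
    fix b assume b: "b < ?L"
    have "Ms!b = (M#Ms)!(Suc b)" by simp
    moreover have "t' (Suc b) - t' b = t (Suc (Suc b)) - t (Suc b)"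
      using t1le[of b] b unfolding t'_def by simp
    ultimately show "Ms!b \<in> carrier_mat (t' (Suc b) - t' b) (t' (Suc b) - t' b)"
      using Cons.prems(1) b by auto
  qed
  have h2: "\<forall>b<?L. t' b \<le> t' (Suc b)"
    using mono t1le unfolding t'_def by (auto simp: diff_le_mono)
  have h3: "t' 0 = 0" unfolding t'_def by simp
  note IH = Cons.IH[OF h1 h2 h3]
  have M: "M \<in> carrier_mat (t 1) (t 1)" using Cons.prems(1,3) by force
  have BM: "blkdiag Ms \<in> carrier_mat (t' ?L) (t' ?L)" using IH by simp
  have eq: "blkdiag (M # Ms) = four_block_mat M (0\<^sub>m (t 1) (t' ?L)) (0\<^sub>m (t' ?L) (t 1)) (blkdiag Ms)"
    using M BM by simp
  have tot: "t 1 + t' ?L = t (Suc ?L)" using t1le[of ?L] unfolding t'_def by simp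
  show ?case
  proof (intro conjI allI impI)
    show "blkdiag (M # Ms) \<in> carrier_mat (t (length (M # Ms))) (t (length (M # Ms)))"
      unfolding eq using M BM tot by auto
  next
    fix b i j
    assume b: "b < length (M # Ms)" and i1: "t b \<le> i" and i2: "i < t (Suc b)"
      and j: "j < t (length (M # Ms))"
    have "t (Suc b) \<le> t (Suc ?L)" using mono_chain[OF mono, of "Suc b" "Suc ?L"] b by simp
    then have ir: "i < t 1 + t' ?L" using i2 tot by simp
    have jr: "j < t 1 + t' ?L" using j tot by simp
    show "blkdiag (M # Ms) $$ (i, j) =
       (if t b \<le> j \<and> j < t (Suc b) then (M # Ms) ! b $$ (i - t b, j - t b) else 0)"
    proof (cases b)
      case 0
      then show ?thesis using i2 ir jr M BM Cons.prems(3) unfolding eq by auto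
    next
      case (Suc b')
      have b': "b' < ?L" using b Suc by simp
      have it1: "t 1 \<le> i" using t1le[of b'] b' i1 Suc by simp
      have i1': "t' b' \<le> i - t 1" using i1 Suc it1 unfolding t'_def by simp
      have i2': "i - t 1 < t' (Suc b')" using i2 Suc it1 t1le[of "Suc b'"] b' unfolding t'_def by simp
      show ?thesis
      proof (cases "j < t 1")
        case True
        then have "\<not> (t b \<le> j)" using t1le[of b'] b' Suc by simp
        then show ?thesis using True it1 ir jr M BM unfolding eq by auto
      next
        case False
        have j': "j - t 1 < t' ?L" using jr False by simp
        have e1: "blkdiag (M # Ms) $$ (i, j) = blkdiag Ms $$ (i - t 1, j - t 1)"
          using False it1 ir jr M BM unfolding eq by auto
        have e2: "blkdiag Ms $$ (i - t 1, j - t 1) = (if t' b' \<le> j - t 1 \<and> j - t 1 < t' (Suc b')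
            then Ms!b' $$ (i - t 1 - t' b', j - t 1 - t' b') else 0)"
          using IH b' i1' i2' j' by blast
        have c: "(t' b' \<le> j - t 1 \<and> j - t 1 < t' (Suc b')) = (t b \<le> j \<and> j < t (Suc b))"
          using False Suc t1le[of b'] t1le[of "Suc b'"] b' unfolding t'_def by auto
        have d1: "i - t 1 - t' b' = i - t b" using Suc it1 t1le[of b'] b' unfolding t'_def by simp
        have d2: "j - t 1 - t' b' = j - t b" using Suc False t1le[of b'] b' unfolding t'_def by simp
        show ?thesis using e1 e2 c d1 d2 Suc by simp
      qed
    qed
  qed
qed



lemma sum_split2:
  assumes "finite S" "i \<in> S" "j \<in> S" "i \<noteq> j"
  shows "sum f S = f i + f j + sum f (S - {i,j})"
proof -
  have "sum f S = f i + sum f (S - {i})" using assms by (simp add: sum.remove)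
  also have "sum f (S - {i}) = f j + sum f (S - {i} - {j})" using assms by (simp add: sum.remove)
  also have "S - {i} - {j} = S - {i,j}" by auto
  finally show ?thesis by (simp add: add.assoc)
qed

lemma le_sqrt_self:
  fixes x :: real assumes "0 \<le> x" "x \<le> 1" shows "x \<le> sqrt x"
proof -
  have "sqrt x \<le> 1" using assms by simp
  then have "sqrt x * sqrt x \<le> sqrt x * 1" using assms by (intro mult_left_mono) auto
  then show ?thesis using assms by simp
qed

lemma stiefel_entry:
  assumes "X \<in> stiefel d K" "l < K" "m < K"
  shows "(\<Sum>k<d. X$$(k,l) * X$$(k,m)) = (if l = m then 1 else 0)"
proof -
  have X: "X \<in> carrier_mat d K" and XX: "X\<^sup>T * X = 1\<^sub>m K" using assms by (auto simp: stiefel_def)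
  have "(X\<^sup>T * X) $$ (l,m) = (\<Sum>k<d. X\<^sup>T $$ (l,k) * X $$ (k,m))"
    using mult_entry[of "X\<^sup>T" K d X K l m] X assms by simp
  also have "\<dots> = (\<Sum>k<d. X$$(k,l) * X$$(k,m))" using X assms by (intro sum.cong) auto
  finally show ?thesis using XX assms by simp
qed

lemma stiefelI:
  assumes "X \<in> carrier_mat d K" "\<And>l m. l < K \<Longrightarrow> m < K \<Longrightarrow> (\<Sum>k<d. X$$(k,l) * X$$(k,m)) = (if l = m then 1 else 0)"
  shows "X \<in> stiefel d K"
proof -
  have "X\<^sup>T * X = 1\<^sub>m K"
  proof (rule eq_matI)
    fix l m assume "l < dim_row (1\<^sub>m K)" "m < dim_col (1\<^sub>m K)"
    then have l: "l < K" and m: "m < K" by auto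
    have "(X\<^sup>T * X) $$ (l,m) = (\<Sum>k<d. X\<^sup>T $$ (l,k) * X $$ (k,m))"
      using mult_entry[of "X\<^sup>T" K d X K l m] assms l m by simp
    also have "\<dots> = (\<Sum>k<d. X$$(k,l) * X$$(k,m))" using assms l m by (intro sum.cong) auto
    finally show "(X\<^sup>T * X) $$ (l,m) = 1\<^sub>m K $$ (l,m)" using assms(2)[OF l m] l m by simp
  qed (use assms in auto)
  then show ?thesis using assms by (simp add: stiefel_def)
qed

lemma frob_inner_entries:
  assumes "A \<in> carrier_mat m n"
  shows "frob_inner A B = (\<Sum>i<m. \<Sum>j<n. A $$ (i,j) * B $$ (i,j))"
  using assms by (simp add: frob_inner_def)

lemma givens_step:
  fixes X :: "real mat" and W :: "nat \<Rightarrow> nat \<Rightarrow> real"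
  assumes X: "X \<in> stiefel d K" and i: "i < d" and j: "j < d" and ij: "i \<noteq> j"
    and H: "\<forall>\<epsilon>>0. \<exists>\<delta>>0. \<forall>Y\<in>stiefel d K. frob_norm (Y - X) < \<delta> \<longrightarrow>
       (\<Sum>k<d. \<Sum>l<K. W k l * (Y$$(k,l) - X$$(k,l))) \<le> \<epsilon> * frob_norm (Y - X)"
  shows "(\<Sum>l<K. W j l * X$$(i,l)) \<le> (\<Sum>l<K. W i l * X$$(j,l))"
proof -
  have Xc: "X \<in> carrier_mat d K" using X by (simp add: stiefel_def)
  define M where "M = (\<Sum>l<K. X$$(i,l)^2 + X$$(j,l)^2)"
  define T where "T = (\<Sum>l<K. W i l * X$$(i,l) + W j l * X$$(j,l))"
  define D where "D = (\<Sum>l<K. W j l * X$$(i,l)) - (\<Sum>l<K. W i l * X$$(j,l))"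
  have M0: "M \<ge> 0" unfolding M_def by (intro sum_nonneg) auto
  define Yf where "Yf s = mat d K (\<lambda>(k,l). if k = i then sqrt (1 - s^2) * X$$(i,l) - s * X$$(j,l)
      else if k = j then s * X$$(i,l) + sqrt (1 - s^2) * X$$(j,l) else X$$(k,l))" for s :: real
  have key: "Yf s \<in> stiefel d K \<and> frob_norm (Yf s - X) \<le> s * sqrt (2 * M) \<and>
     (\<Sum>k<d. \<Sum>l<K. W k l * (Yf s$$(k,l) - X$$(k,l))) = (sqrt (1 - s^2) - 1) * T + s * D"
    if s0: "0 < s" and s1: "s \<le> 1/2" for s
  proof -
    define c where "c = sqrt (1 - s^2)"
    have s2: "s^2 \<le> 1" using s0 s1 by (simp add: power_le_one)
    have cc: "c^2 + s^2 = 1" unfolding c_def using s2 by simp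
    have c1: "c \<le> 1" unfolding c_def using s0 by simp
    have c2: "1 - c \<le> s^2"
    proof -
      have "1 - s^2 \<le> sqrt (1 - s^2)" using s2
        by (intro le_sqrt_self) auto
      then show ?thesis unfolding c_def by simp
    qed
    have Y: "Yf s \<in> carrier_mat d K" by (simp add: Yf_def)
    have Ye: "Yf s $$ (k,l) = (if k = i then c * X$$(i,l) - s * X$$(j,l)
      else if k = j then s * X$$(i,l) + c * X$$(j,l) else X$$(k,l))" if "k < d" "l < K" for k l
      using that by (simp add: Yf_def c_def)
    have st: "Yf s \<in> stiefel d K"
    proof (rule stiefelI[OF Y])
      fix l m assume l: "l < K" and m: "m < K"
      have "(\<Sum>k<d. Yf s$$(k,l) * Yf s$$(k,m)) = (\<Sum>k<d. X$$(k,l) * X$$(k,m))"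
      proof -
        have "(\<Sum>k<d. Yf s$$(k,l) * Yf s$$(k,m)) = Yf s$$(i,l) * Yf s$$(i,m) + Yf s$$(j,l) * Yf s$$(j,m)
           + (\<Sum>k\<in>{..<d} - {i,j}. Yf s$$(k,l) * Yf s$$(k,m))"
          using sum_split2[of "{..<d}" i j] i j ij by simp
        also have "(\<Sum>k\<in>{..<d} - {i,j}. Yf s$$(k,l) * Yf s$$(k,m)) = (\<Sum>k\<in>{..<d} - {i,j}. X$$(k,l) * X$$(k,m))"
          by (rule sum.cong) (use l m Ye in auto)
        also have "Yf s$$(i,l) * Yf s$$(i,m) + Yf s$$(j,l) * Yf s$$(j,m) = X$$(i,l) * X$$(i,m) + X$$(j,l) * X$$(j,m)"
        proof -
          have "Yf s$$(i,l) * Yf s$$(i,m) + Yf s$$(j,l) * Yf s$$(j,m) =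
            (c^2 + s^2) * (X$$(i,l) * X$$(i,m) + X$$(j,l) * X$$(j,m))"
            using Ye i j l m ij by (simp add: algebra_simps power2_eq_square)
          then show ?thesis using cc by simp
        qed
        also have "X$$(i,l) * X$$(i,m) + X$$(j,l) * X$$(j,m) + (\<Sum>k\<in>{..<d} - {i,j}. X$$(k,l) * X$$(k,m))
            = (\<Sum>k<d. X$$(k,l) * X$$(k,m))"
          using sum_split2[of "{..<d}" i j "\<lambda>k. X$$(k,l) * X$$(k,m)"] i j ij by simp
        finally show ?thesis .
      qed
      then show "(\<Sum>k<d. Yf s$$(k,l) * Yf s$$(k,m)) = (if l = m then 1 else 0)"
        using stiefel_entry[OF X l m] by simp
    qed
    have Yi: "Yf s $$ (i,l) = c * X$$(i,l) - s * X$$(j,l)" if "l < K" for l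
      using Ye[OF i that] by simp
    have Yj: "Yf s $$ (j,l) = s * X$$(i,l) + c * X$$(j,l)" if "l < K" for l
      using Ye[OF j that] ij by simp
    have diffe: "(Yf s - X) $$ (k,l) = Yf s$$(k,l) - X$$(k,l)" if "k < d" "l < K" for k l
      using that Y Xc by simp
    have rowsum: "(\<Sum>k<d. F k) = F i + F j" if "\<And>k. k < d \<Longrightarrow> k \<noteq> i \<Longrightarrow> k \<noteq> j \<Longrightarrow> F k = 0" for F :: "nat \<Rightarrow> real"
      using sum_split2[of "{..<d}" i j F] i j ij that by simp
    have nrm2: "frob_inner (Yf s - X) (Yf s - X) = (2 - 2 * c) * M"
    proof -
      have "frob_inner (Yf s - X) (Yf s - X) = (\<Sum>k<d. \<Sum>l<K. (Yf s$$(k,l) - X$$(k,l)) * (Yf s$$(k,l) - X$$(k,l)))"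
        using Y Xc by (simp add: frob_inner_def)
      also have "\<dots> = (\<Sum>l<K. (Yf s$$(i,l) - X$$(i,l)) * (Yf s$$(i,l) - X$$(i,l)))
          + (\<Sum>l<K. (Yf s$$(j,l) - X$$(j,l)) * (Yf s$$(j,l) - X$$(j,l)))"
        by (rule rowsum) (auto simp: Ye)
      also have "\<dots> = (\<Sum>l<K. ((c - 1) * X$$(i,l) - s * X$$(j,l))^2 + (s * X$$(i,l) + (c - 1) * X$$(j,l))^2)"
        unfolding sum.distrib[symmetric]
        by (rule sum.cong) (simp_all add: Yi Yj power2_eq_square algebra_simps)
      also have "\<dots> = (\<Sum>l<K. ((c - 1)^2 + s^2) * (X$$(i,l)^2 + X$$(j,l)^2))"
        by (rule sum.cong) (simp_all add: power2_eq_square algebra_simps)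
      also have "(c - 1)^2 + s^2 = 2 - 2 * c" using cc by (simp add: power2_eq_square algebra_simps)
      finally show ?thesis by (simp add: M_def sum_distrib_left)
    qed
    have nrm: "frob_norm (Yf s - X) \<le> s * sqrt (2 * M)"
    proof -
      have "frob_norm (Yf s - X) = sqrt ((2 - 2 * c) * M)" by (simp add: frob_norm_def nrm2)
      also have "\<dots> \<le> sqrt ((2 * s^2) * M)" using c2 M0 by (intro real_sqrt_le_mono mult_right_mono) auto
      also have "\<dots> = s * sqrt (2 * M)" using s0 by (simp add: real_sqrt_mult)
      finally show ?thesis .
    qed
    have lin: "(\<Sum>k<d. \<Sum>l<K. W k l * (Yf s$$(k,l) - X$$(k,l))) = (c - 1) * T + s * D"
    proof -
      have "(\<Sum>k<d. \<Sum>l<K. W k l * (Yf s$$(k,l) - X$$(k,l))) =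
        (\<Sum>l<K. W i l * (Yf s$$(i,l) - X$$(i,l))) + (\<Sum>l<K. W j l * (Yf s$$(j,l) - X$$(j,l)))"
        by (rule rowsum) (auto simp: Ye)
      also have "\<dots> = (\<Sum>l<K. (c - 1) * (W i l * X$$(i,l) + W j l * X$$(j,l)) + s * (W j l * X$$(i,l) - W i l * X$$(j,l)))"
        unfolding sum.distrib[symmetric]
        by (rule sum.cong) (simp_all add: Yi Yj algebra_simps)
      also have "\<dots> = (c - 1) * T + s * D"
        by (simp add: T_def D_def sum.distrib sum_distrib_left sum_subtractf right_diff_distrib distrib_left)
      finally show ?thesis .
    qed
    show ?thesis using st nrm lin by (simp add: c_def)
  qed
  have "D \<le> e" if e: "e > 0" for e
  proof -
    define R where "R = sqrt (2 * M) + 1"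
    have sq0: "sqrt (2 * M) \<ge> 0" using M0 by simp
    have R: "R > 0" unfolding R_def using sq0 by linarith
    have "e / (2 * R) > 0" using e R by simp
    obtain \<delta> where \<delta>: "\<delta> > 0" and Hd: "\<forall>Y\<in>stiefel d K. frob_norm (Y - X) < \<delta> \<longrightarrow>
       (\<Sum>k<d. \<Sum>l<K. W k l * (Y$$(k,l) - X$$(k,l))) \<le> (e / (2 * R)) * frob_norm (Y - X)"
      using H \<open>e / (2 * R) > 0\<close> by blast
    define s where "s = min (1/2) (min (\<delta> / (2 * R)) (e / (2 * (\<bar>T\<bar> + 1))))"
    have s0: "s > 0" unfolding s_def using \<delta> R e by simp
    have s1: "s \<le> 1/2" unfolding s_def by (rule min.cobounded1)
    have s2: "s \<le> \<delta> / (2 * R)" unfolding s_def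
      using min.cobounded2[of "1/2" "min (\<delta>/(2*R)) (e/(2*(\<bar>T\<bar>+1)))"]
        min.cobounded1[of "\<delta>/(2*R)" "e/(2*(\<bar>T\<bar>+1))"] by linarith
    have s3: "s \<le> e / (2 * (\<bar>T\<bar> + 1))" unfolding s_def
      using min.cobounded2[of "1/2" "min (\<delta>/(2*R)) (e/(2*(\<bar>T\<bar>+1)))"]
        min.cobounded2[of "\<delta>/(2*R)" "e/(2*(\<bar>T\<bar>+1))"] by linarith
    note k = key[OF s0 s1]
    define c where "c = sqrt (1 - s^2)"
    have sq: "s^2 \<le> 1" using s0 s1 by (simp add: power_le_one)
    have c2: "1 - c \<le> s^2"
    proof -
      have "1 - s^2 \<le> sqrt (1 - s^2)" using sq
        by (intro le_sqrt_self) auto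
      then show ?thesis unfolding c_def by simp
    qed
    have c1: "0 \<le> 1 - c" unfolding c_def using s0 by simp
    have nY: "frob_norm (Yf s - X) \<le> s * sqrt (2 * M)" using k by simp
    have "s * sqrt (2 * M) < \<delta>"
    proof -
      have "s * sqrt (2 * M) \<le> (\<delta> / (2 * R)) * R" using s2 s0 R sq0 unfolding R_def
        by (intro mult_mono) auto
      also have "\<dots> = \<delta> / 2" using R by simp
      finally show ?thesis using \<delta> by simp
    qed
    then have "frob_norm (Yf s - X) < \<delta>" using nY by simp
    then have le1: "(\<Sum>k<d. \<Sum>l<K. W k l * (Yf s$$(k,l) - X$$(k,l))) \<le> (e / (2 * R)) * frob_norm (Yf s - X)"
      using Hd k by blast
    have eqn: "(\<Sum>k<d. \<Sum>l<K. W k l * (Yf s$$(k,l) - X$$(k,l))) = (c - 1) * T + s * D"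
      using k by (simp add: c_def)
    have ineq: "(c - 1) * T + s * D \<le> (e / (2 * R)) * frob_norm (Yf s - X)"
      using le1 eqn by linarith
    have "(e / (2 * R)) * frob_norm (Yf s - X) \<le> (e / (2 * R)) * (s * R)"
      using nY e R s0 sq0 by (intro mult_left_mono) (auto simp: R_def intro!: order.trans[OF _ mult_left_mono[of "sqrt (2*M)" "sqrt (2*M) + 1" s]])
    also have "\<dots> = s * (e / 2)" using R by simp
    finally have le2: "(e / (2 * R)) * frob_norm (Yf s - X) \<le> s * (e / 2)" .
    have "(c - 1) * T + s * D \<le> s * (e / 2)" using ineq le2 by linarith
    moreover have "(1 - c) * T \<le> s^2 * \<bar>T\<bar>"
    proof -
      have "(1 - c) * T \<le> (1 - c) * \<bar>T\<bar>" using c1 by (simp add: mult_left_mono)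
      also have "\<dots> \<le> s^2 * \<bar>T\<bar>" using c2 by (simp add: mult_right_mono)
      finally show ?thesis .
    qed
    ultimately have "s * D \<le> s * (e / 2) + s^2 * \<bar>T\<bar>" by (simp add: algebra_simps)
    then have "s * D \<le> s * (e / 2 + s * \<bar>T\<bar>)" by (simp add: power2_eq_square algebra_simps)
    then have "D \<le> e / 2 + s * \<bar>T\<bar>" using s0 by (rule mult_left_le_imp_le)
    moreover have "s * \<bar>T\<bar> \<le> e / 2"
    proof -
      have "s * \<bar>T\<bar> \<le> (e / (2 * (\<bar>T\<bar> + 1))) * (\<bar>T\<bar> + 1)"
        using s3 s0 by (intro mult_mono) auto
      also have "\<dots> = e / 2" by (simp add: field_simps)
      finally show ?thesis .
    qed
    ultimately show ?thesis by simp
  qed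
  then have "D \<le> 0" by (meson dense_ge)
  then show ?thesis unfolding D_def by simp
qed



definition critC :: "nat \<Rightarrow> nat \<Rightarrow> real mat \<Rightarrow> real mat \<Rightarrow> bool" where
  "critC d K A Q = (\<forall>i<d. \<forall>j<d. (\<Sum>l<K. A$$(i,l) * Q$$(j,l)) = (\<Sum>l<K. A$$(j,l) * Q$$(i,l)))"

lemma entry_le_frob:
  assumes "M \<in> carrier_mat m n" "a < m" "b < n"
  shows "\<bar>M $$ (a,b)\<bar> \<le> frob_norm M"
proof -
  have "M$$(a,b) * M$$(a,b) \<le> (\<Sum>j<n. M$$(a,j) * M$$(a,j))"
    using assms by (intro member_le_sum[of b "{..<n}" "\<lambda>j. M$$(a,j) * M$$(a,j)"]) auto
  also have "\<dots> \<le> (\<Sum>i<m. \<Sum>j<n. M$$(i,j) * M$$(i,j))"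
    using assms by (intro member_le_sum[of a "{..<m}" "\<lambda>i. \<Sum>j<n. M$$(i,j) * M$$(i,j)"])
      (auto intro: sum_nonneg)
  finally have "M$$(a,b) * M$$(a,b) \<le> (\<Sum>i<m. \<Sum>j<n. M$$(i,j) * M$$(i,j))" .
  then have "sqrt (M$$(a,b) * M$$(a,b)) \<le> sqrt (\<Sum>i<m. \<Sum>j<n. M$$(i,j) * M$$(i,j))"
    by (rule real_sqrt_le_mono)
  then show ?thesis using assms by (simp add: frob_norm_def frob_inner_def real_sqrt_mult_self)
qed

lemma g_stiefel:
  assumes g_def: "\<And>X. g X = ereal (frob_inner A X) + indicator_fun (stiefel d K) X"
  shows "X \<in> stiefel d K \<Longrightarrow> g X = ereal (frob_inner A X)"
    and "X \<notin> stiefel d K \<Longrightarrow> g X = \<infinity>"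
  using assms by (auto simp: indicator_fun_def)

lemma frechet_H:
  assumes g_def: "\<And>X. g X = ereal (frob_inner A X) + indicator_fun (stiefel d K) X"
    and A: "A \<in> carrier_mat d K"
    and V: "V \<in> frechet_subdiff d K g X"
  shows "X \<in> stiefel d K"
    and "\<forall>\<epsilon>>0. \<exists>\<delta>>0. \<forall>Y\<in>stiefel d K. frob_norm (Y - X) < \<delta> \<longrightarrow>
       (\<Sum>k<d. \<Sum>l<K. (V$$(k,l) - A$$(k,l)) * (Y$$(k,l) - X$$(k,l))) \<le> \<epsilon> * frob_norm (Y - X)"
proof -
  have Vc: "V \<in> carrier_mat d K" and Xc: "X \<in> carrier_mat d K" and fin: "\<bar>g X\<bar> \<noteq> \<infinity>"
    and F: "\<forall>\<epsilon>>0. \<exists>\<delta>>0. \<forall>Y \<in> carrier_mat d K. frob_norm (Y - X) < \<delta> \<longrightarrow>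
        g Y \<ge> ereal (real_of_ereal (g X) + frob_inner V (Y - X) - \<epsilon> * frob_norm (Y - X))"
    using V by (auto simp: frechet_subdiff_def)
  show X: "X \<in> stiefel d K"
  proof (rule ccontr)
    assume "X \<notin> stiefel d K"
    then have "g X = \<infinity>" by (rule g_stiefel(2)[OF g_def])
    then show False using fin by simp
  qed
  show "\<forall>\<epsilon>>0. \<exists>\<delta>>0. \<forall>Y\<in>stiefel d K. frob_norm (Y - X) < \<delta> \<longrightarrow>
       (\<Sum>k<d. \<Sum>l<K. (V$$(k,l) - A$$(k,l)) * (Y$$(k,l) - X$$(k,l))) \<le> \<epsilon> * frob_norm (Y - X)"
  proof (intro allI impI)
    fix \<epsilon> :: real assume e: "\<epsilon> > 0"
    then obtain \<delta> where d: "\<delta> > 0" and Fd: "\<forall>Y \<in> carrier_mat d K. frob_norm (Y - X) < \<delta> \<longrightarrow>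
        g Y \<ge> ereal (real_of_ereal (g X) + frob_inner V (Y - X) - \<epsilon> * frob_norm (Y - X))"
      using F by blast
    show "\<exists>\<delta>>0. \<forall>Y\<in>stiefel d K. frob_norm (Y - X) < \<delta> \<longrightarrow>
       (\<Sum>k<d. \<Sum>l<K. (V$$(k,l) - A$$(k,l)) * (Y$$(k,l) - X$$(k,l))) \<le> \<epsilon> * frob_norm (Y - X)"
    proof (intro exI[of _ \<delta>] conjI ballI impI d)
      fix Y assume Y: "Y \<in> stiefel d K" and n: "frob_norm (Y - X) < \<delta>"
      have Yc: "Y \<in> carrier_mat d K" using Y by (simp add: stiefel_def)
      have "g Y \<ge> ereal (real_of_ereal (g X) + frob_inner V (Y - X) - \<epsilon> * frob_norm (Y - X))"
        using Fd Yc n by blast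
      then have ie: "frob_inner A Y \<ge> frob_inner A X + frob_inner V (Y - X) - \<epsilon> * frob_norm (Y - X)"
        using g_stiefel(1)[OF g_def, OF Y] g_stiefel(1)[OF g_def, OF X] by simp
      have eq: "(\<Sum>k<d. \<Sum>l<K. (V$$(k,l) - A$$(k,l)) * (Y$$(k,l) - X$$(k,l)))
          = frob_inner V (Y - X) - (frob_inner A Y - frob_inner A X)"
      proof -
        have "frob_inner V (Y - X) = (\<Sum>k<d. \<Sum>l<K. V$$(k,l) * (Y$$(k,l) - X$$(k,l)))"
          using Vc Yc Xc by (simp add: frob_inner_def)
        moreover have "frob_inner A Y - frob_inner A X = (\<Sum>k<d. \<Sum>l<K. A$$(k,l) * (Y$$(k,l) - X$$(k,l)))"
          using A by (simp add: frob_inner_def sum_subtractf[symmetric] right_diff_distrib)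
        ultimately show ?thesis
          by (simp add: sum_subtractf[symmetric] left_diff_distrib)
      qed
      show "(\<Sum>k<d. \<Sum>l<K. (V$$(k,l) - A$$(k,l)) * (Y$$(k,l) - X$$(k,l))) \<le> \<epsilon> * frob_norm (Y - X)"
        using ie eq by linarith
    qed
  qed
qed

lemma entry_tendsto:
  assumes "\<forall>k. Xs k \<in> carrier_mat m n" "X \<in> carrier_mat m n" "(\<lambda>k. frob_norm (Xs k - X)) \<longlonglongrightarrow> 0"
    "a < m" "b < n"
  shows "(\<lambda>k. Xs k $$ (a,b)) \<longlonglongrightarrow> X $$ (a,b)"
proof -
  have "(\<lambda>k. Xs k $$ (a,b) - X $$ (a,b)) \<longlonglongrightarrow> 0"
  proof (rule tendsto_0_le[OF assms(3), of _ 1])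
    show "\<forall>\<^sub>F k in sequentially. norm (Xs k $$ (a,b) - X $$ (a,b)) \<le> norm (frob_norm (Xs k - X)) * 1"
    proof (rule always_eventually, rule allI)
      fix k
      have "norm (Xs k $$ (a,b) - X $$ (a,b)) = \<bar>(Xs k - X) $$ (a,b)\<bar>"
        using assms by simp
      also have "\<dots> \<le> frob_norm (Xs k - X)"
        using assms by (intro entry_le_frob[of _ m n]) auto
      finally show "norm (Xs k $$ (a,b) - X $$ (a,b)) \<le> norm (frob_norm (Xs k - X)) * 1" by simp
    qed
  qed
  then show ?thesis by (simp add: LIM_zero_iff)
qed

lemma critical_imp_C:
  assumes g_def: "\<And>X. g X = ereal (frob_inner A X) + indicator_fun (stiefel d K) X"
    and A: "A \<in> carrier_mat d K"
    and Q: "Q \<in> carrier_mat d K"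
    and L: "0\<^sub>m d K \<in> limiting_subdiff d K g Q"
  shows "critC d K A Q"
proof -
  obtain Xs Vs where XV: "\<forall>k. Xs k \<in> carrier_mat d K \<and> Vs k \<in> frechet_subdiff d K g (Xs k)"
    and cX: "(\<lambda>k. frob_norm (Xs k - Q)) \<longlonglongrightarrow> 0"
    and cV: "(\<lambda>k. frob_norm (Vs k - 0\<^sub>m d K)) \<longlonglongrightarrow> 0"
    using L unfolding limiting_subdiff_def by blast
  have Vc: "\<forall>k. Vs k \<in> carrier_mat d K" using XV by (auto simp: frechet_subdiff_def)
  have Xc: "\<forall>k. Xs k \<in> carrier_mat d K" using XV by auto
  have eqk: "(\<Sum>l<K. (Vs k$$(j,l) - A$$(j,l)) * Xs k$$(i,l)) = (\<Sum>l<K. (Vs k$$(i,l) - A$$(i,l)) * Xs k$$(j,l))"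
    if i: "i < d" and j: "j < d" for i j k
  proof (cases "i = j")
    case True then show ?thesis by simp
  next
    case False
    have fr: "Vs k \<in> frechet_subdiff d K g (Xs k)" using XV by blast
    note FH = frechet_H[OF g_def A fr]
    show ?thesis
      by (rule antisym[OF givens_step[OF FH(1) i j False FH(2)] givens_step[OF FH(1) j i not_sym[OF False] FH(2)]])
  qed
  show ?thesis unfolding critC_def
  proof (intro allI impI)
    fix i j assume i: "i < d" and j: "j < d"
    have cXe: "(\<lambda>k. Xs k $$ (a,b)) \<longlonglongrightarrow> Q $$ (a,b)" if "a < d" "b < K" for a b
      using entry_tendsto[OF Xc Q cX that] .
    have cVe: "(\<lambda>k. Vs k $$ (a,b)) \<longlonglongrightarrow> 0" if "a < d" "b < K" for a b
      using entry_tendsto[OF Vc _ cV that] that by simp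
    have l1: "(\<lambda>k. \<Sum>l<K. (Vs k$$(j,l) - A$$(j,l)) * Xs k$$(i,l)) \<longlonglongrightarrow> (\<Sum>l<K. (0 - A$$(j,l)) * Q$$(i,l))"
      by (intro tendsto_sum tendsto_mult tendsto_diff cXe cVe tendsto_const) (use i j in auto)
    have l2: "(\<lambda>k. \<Sum>l<K. (Vs k$$(i,l) - A$$(i,l)) * Xs k$$(j,l)) \<longlonglongrightarrow> (\<Sum>l<K. (0 - A$$(i,l)) * Q$$(j,l))"
      by (intro tendsto_sum tendsto_mult tendsto_diff cXe cVe tendsto_const) (use i j in auto)
    have "(\<Sum>l<K. (0 - A$$(j,l)) * Q$$(i,l)) = (\<Sum>l<K. (0 - A$$(i,l)) * Q$$(j,l))"
      using LIMSEQ_unique[OF l1] l2 eqk[OF i j] by simp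
    then show "(\<Sum>l<K. A$$(i,l) * Q$$(j,l)) = (\<Sum>l<K. A$$(j,l) * Q$$(i,l))"
      by (simp add: sum_negf)
  qed
qed



lemma C_quad_bound:
  assumes A: "A \<in> carrier_mat d K" and Q: "Q \<in> stiefel d K" and C: "critC d K A Q"
  shows "\<exists>c::real. c \<ge> 0 \<and> (\<forall>Y\<in>stiefel d K. frob_inner A Y - frob_inner A Q \<ge> - c * frob_inner (Y - Q) (Y - Q))"
proof -
  have Qc: "Q \<in> carrier_mat d K" and QtQ: "Q\<^sup>T * Q = 1\<^sub>m K" using Q by (auto simp: stiefel_def)
  have AQt: "A * Q\<^sup>T = Q * A\<^sup>T"
  proof (rule eq_matI)
    fix i j assume "i < dim_row (Q * A\<^sup>T)" "j < dim_col (Q * A\<^sup>T)"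
    then have i: "i < d" and j: "j < d" using Qc A by auto
    have "(A * Q\<^sup>T) $$ (i,j) = (\<Sum>l<K. A$$(i,l) * Q$$(j,l))"
      using mult_entry[of A d K "Q\<^sup>T" d i j] A Qc i j by simp
    also have "\<dots> = (\<Sum>l<K. A$$(j,l) * Q$$(i,l))" using C i j by (simp add: critC_def)
    also have "\<dots> = (Q * A\<^sup>T) $$ (i,j)"
      using mult_entry[of Q d K "A\<^sup>T" d i j] A Qc i j by (simp add: mult.commute)
    finally show "(A * Q\<^sup>T) $$ (i,j) = (Q * A\<^sup>T) $$ (i,j)" .
  qed (use A Qc in auto)
  define S where "S = A\<^sup>T * Q"
  have S: "S \<in> carrier_mat K K" using A Qc by (simp add: S_def)
  have AQS: "A = Q * S"
  proof -
    have "A = A * (Q\<^sup>T * Q)" using A QtQ by simp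
    also have "\<dots> = (A * Q\<^sup>T) * Q" using A Qc by (intro assoc_mult_mat[symmetric]) auto
    also have "\<dots> = (Q * A\<^sup>T) * Q" using AQt by simp
    also have "\<dots> = Q * S" unfolding S_def using A Qc by (intro assoc_mult_mat) auto
    finally show ?thesis .
  qed
  have QtA: "Q\<^sup>T * A = S"
  proof -
    have "Q\<^sup>T * A = Q\<^sup>T * (Q * S)" using AQS by simp
    also have "\<dots> = (Q\<^sup>T * Q) * S" using Qc S by (intro assoc_mult_mat[symmetric]) auto
    finally show ?thesis using QtQ S by simp
  qed
  have Se: "S $$ (m,l) = (\<Sum>k<d. A$$(k,m) * Q$$(k,l))" if "m < K" "l < K" for m l
    using mult_entry[of "A\<^sup>T" K d Q K m l] A Qc that by (simp add: S_def)
  have Ssym: "S $$ (m,l) = S $$ (l,m)" if m: "m < K" and l: "l < K" for m l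
  proof -
    have "S $$ (m,l) = (Q\<^sup>T * A) $$ (m,l)" using QtA by simp
    also have "\<dots> = (\<Sum>k<d. Q$$(k,m) * A$$(k,l))"
      using mult_entry[of "Q\<^sup>T" K d A K m l] A Qc m l by simp
    also have "\<dots> = S $$ (l,m)" using Se[OF l m] by (simp add: mult.commute)
    finally show ?thesis .
  qed
  have Ae: "A $$ (k,l) = (\<Sum>m<K. Q$$(k,m) * S$$(m,l))" if "k < d" "l < K" for k l
    using mult_entry[OF Qc S that] AQS by simp
  define c where "c = (\<Sum>m<K. \<Sum>l<K. \<bar>S$$(m,l)\<bar>) / 2"
  have c0: "c \<ge> 0" unfolding c_def by (auto intro: sum_nonneg)
  have main: "frob_inner A Y - frob_inner A Q \<ge> - c * frob_inner (Y - Q) (Y - Q)" if Y: "Y \<in> stiefel d K" for Y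
  proof -
    have Yc: "Y \<in> carrier_mat d K" using Y by (simp add: stiefel_def)
    define Z where "Z k l = Y$$(k,l) - Q$$(k,l)" for k l
    define N where "N = (\<Sum>k<d. \<Sum>l<K. Z k l * Z k l)"
    have NN: "frob_inner (Y - Q) (Y - Q) = N"
      using Yc Qc by (simp add: frob_inner_def N_def Z_def)
    define G where "G m l = (\<Sum>k<d. Q$$(k,m) * Z k l)" for m l
    define E where "E m l = (\<Sum>k<d. Z k m * Z k l)" for m l
    have lhs: "frob_inner A Y - frob_inner A Q = (\<Sum>m<K. \<Sum>l<K. S$$(m,l) * G m l)"
    proof -
      have "frob_inner A Y - frob_inner A Q = (\<Sum>k<d. \<Sum>l<K. A$$(k,l) * Z k l)"
        using A by (simp add: frob_inner_def Z_def sum_subtractf[symmetric] right_diff_distrib)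
      also have "\<dots> = (\<Sum>k<d. \<Sum>l<K. \<Sum>m<K. Q$$(k,m) * S$$(m,l) * Z k l)"
        by (rule sum.cong[OF refl])+ (simp add: Ae sum_distrib_right)
      also have "\<dots> = (\<Sum>l<K. \<Sum>k<d. \<Sum>m<K. Q$$(k,m) * S$$(m,l) * Z k l)"
        by (rule sum.swap)
      also have "\<dots> = (\<Sum>l<K. \<Sum>m<K. \<Sum>k<d. Q$$(k,m) * S$$(m,l) * Z k l)"
        by (rule sum.cong[OF refl]) (rule sum.swap)
      also have "\<dots> = (\<Sum>m<K. \<Sum>l<K. \<Sum>k<d. Q$$(k,m) * S$$(m,l) * Z k l)"
        by (rule sum.swap)
      also have "\<dots> = (\<Sum>m<K. \<Sum>l<K. S$$(m,l) * G m l)"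
        by (rule sum.cong[OF refl])+ (simp add: G_def sum_distrib_left mult_ac)
      finally show ?thesis .
    qed
    have GE: "G m l + G l m = - E m l" if m: "m < K" and l: "l < K" for m l
    proof -
      have "(\<Sum>k<d. Y$$(k,m) * Y$$(k,l)) = (\<Sum>k<d. Q$$(k,m) * Q$$(k,l))"
        using stiefel_entry[OF Y m l] stiefel_entry[OF Q m l] by simp
      moreover have "(\<Sum>k<d. Y$$(k,m) * Y$$(k,l)) = (\<Sum>k<d. Q$$(k,m) * Q$$(k,l)) + G m l + G l m + E m l"
      proof -
        have "(\<Sum>k<d. Y$$(k,m) * Y$$(k,l)) = (\<Sum>k<d. Q$$(k,m) * Q$$(k,l) + Q$$(k,m) * Z k l + Q$$(k,l) * Z k m + Z k m * Z k l)"
          by (intro sum.cong refl) (simp add: Z_def algebra_simps)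
        then show ?thesis by (simp add: G_def E_def sum.distrib)
      qed
      ultimately show ?thesis by simp
    qed
    have swap: "(\<Sum>m<K. \<Sum>l<K. S$$(m,l) * G m l) = (\<Sum>m<K. \<Sum>l<K. S$$(m,l) * G l m)"
    proof -
      have "(\<Sum>m<K. \<Sum>l<K. S$$(m,l) * G m l) = (\<Sum>l<K. \<Sum>m<K. S$$(m,l) * G m l)" by (rule sum.swap)
      also have "\<dots> = (\<Sum>l<K. \<Sum>m<K. S$$(l,m) * G m l)"
        by (intro sum.cong refl) (simp add: Ssym)
      finally show ?thesis .
    qed
    have twice: "2 * (\<Sum>m<K. \<Sum>l<K. S$$(m,l) * G m l) = - (\<Sum>m<K. \<Sum>l<K. S$$(m,l) * E m l)"
    proof -
      have "2 * (\<Sum>m<K. \<Sum>l<K. S$$(m,l) * G m l) = (\<Sum>m<K. \<Sum>l<K. S$$(m,l) * (G m l + G l m))"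
        using swap by (simp add: distrib_left sum.distrib)
      also have "\<dots> = (\<Sum>m<K. \<Sum>l<K. - (S$$(m,l) * E m l))"
        by (intro sum.cong refl) (simp add: GE)
      finally show ?thesis by (simp add: sum_negf)
    qed
    have colb: "(\<Sum>k<d. Z k m * Z k m) \<le> N" if m: "m < K" for m
    proof -
      have "(\<Sum>k<d. Z k m * Z k m) \<le> (\<Sum>k<d. \<Sum>l<K. Z k l * Z k l)"
        by (intro sum_mono member_le_sum[of m "{..<K}" "\<lambda>l. Z _ l * Z _ l"]) (use m in auto)
      then show ?thesis by (simp add: N_def)
    qed
    have Eb: "\<bar>E m l\<bar> \<le> N" if m: "m < K" and l: "l < K" for m l
    proof -
      have "\<bar>E m l\<bar> \<le> (\<Sum>k<d. \<bar>Z k m * Z k l\<bar>)" unfolding E_def by (rule sum_abs)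
      also have "\<dots> \<le> (\<Sum>k<d. (Z k m * Z k m + Z k l * Z k l) / 2)"
      proof (intro sum_mono)
        fix k
        have "0 \<le> (\<bar>Z k m\<bar> - \<bar>Z k l\<bar>)^2" by simp
        then show "\<bar>Z k m * Z k l\<bar> \<le> (Z k m * Z k m + Z k l * Z k l) / 2"
          by (simp add: power2_eq_square algebra_simps abs_mult)
      qed
      also have "\<dots> = ((\<Sum>k<d. Z k m * Z k m) + (\<Sum>k<d. Z k l * Z k l)) / 2"
        by (simp add: sum.distrib sum_divide_distrib[symmetric])
      also have "\<dots> \<le> N" using colb[OF m] colb[OF l] by simp
      finally show ?thesis .
    qed
    have "\<bar>\<Sum>m<K. \<Sum>l<K. S$$(m,l) * E m l\<bar> \<le> (\<Sum>m<K. \<Sum>l<K. \<bar>S$$(m,l)\<bar> * N)"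
    proof -
      have "\<bar>\<Sum>m<K. \<Sum>l<K. S$$(m,l) * E m l\<bar> \<le> (\<Sum>m<K. \<bar>\<Sum>l<K. S$$(m,l) * E m l\<bar>)" by (rule sum_abs)
      also have "\<dots> \<le> (\<Sum>m<K. \<Sum>l<K. \<bar>S$$(m,l) * E m l\<bar>)" by (intro sum_mono sum_abs)
      also have "\<dots> \<le> (\<Sum>m<K. \<Sum>l<K. \<bar>S$$(m,l)\<bar> * N)"
        by (intro sum_mono) (auto simp: abs_mult intro!: mult_left_mono Eb)
      finally show ?thesis .
    qed
    also have "\<dots> = 2 * c * N" by (simp add: c_def sum_distrib_right)
    finally have "\<bar>\<Sum>m<K. \<Sum>l<K. S$$(m,l) * E m l\<bar> \<le> 2 * c * N" .
    then have "frob_inner A Y - frob_inner A Q \<ge> - c * N" using lhs twice by linarith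
    then show "frob_inner A Y - frob_inner A Q \<ge> - c * frob_inner (Y - Q) (Y - Q)" using NN by simp
  qed
  show ?thesis using main c0 by blast
qed

lemma C_imp_limiting:
  assumes g_def: "\<And>X. g X = ereal (frob_inner A X) + indicator_fun (stiefel d K) X"
    and A: "A \<in> carrier_mat d K" and Q: "Q \<in> stiefel d K" and C: "critC d K A Q"
  shows "0\<^sub>m d K \<in> limiting_subdiff d K g Q"
proof -
  obtain c where c0: "c \<ge> 0" and cb': "\<forall>Y\<in>stiefel d K.
      frob_inner A Y - frob_inner A Q \<ge> - c * frob_inner (Y - Q) (Y - Q)"
    using C_quad_bound[OF A Q C] by blast
  have cb: "frob_inner A Y - frob_inner A Q \<ge> - c * frob_inner (Y - Q) (Y - Q)" if "Y \<in> stiefel d K" for Y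
    using cb' that by blast
  have Qc: "Q \<in> carrier_mat d K" using Q by (simp add: stiefel_def)
  have gQ: "g Q = ereal (frob_inner A Q)" using g_stiefel(1)[OF g_def Q] .
  have z0: "frob_inner (0\<^sub>m d K) M = 0" for M by (simp add: frob_inner_def)
  have F: "\<forall>\<epsilon>>0. \<exists>\<delta>>0. \<forall>Y\<in>carrier_mat d K. frob_norm (Y - Q) < \<delta> \<longrightarrow>
        ereal (real_of_ereal (g Q) + frob_inner (0\<^sub>m d K) (Y - Q) - \<epsilon> * frob_norm (Y - Q)) \<le> g Y"
  proof (intro allI impI)
    fix \<epsilon> :: real assume e: "\<epsilon> > 0"
    define \<delta> where "\<delta> = \<epsilon> / (c + 1)"
    have d0: "\<delta> > 0" using e c0 by (simp add: \<delta>_def)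
    show "\<exists>\<delta>>0. \<forall>Y\<in>carrier_mat d K. frob_norm (Y - Q) < \<delta> \<longrightarrow>
        ereal (real_of_ereal (g Q) + frob_inner (0\<^sub>m d K) (Y - Q) - \<epsilon> * frob_norm (Y - Q)) \<le> g Y"
    proof (intro exI[of _ \<delta>] conjI d0 ballI impI)
      fix Y assume Yc: "Y \<in> carrier_mat d K" and n: "frob_norm (Y - Q) < \<delta>"
      show "ereal (real_of_ereal (g Q) + frob_inner (0\<^sub>m d K) (Y - Q) - \<epsilon> * frob_norm (Y - Q)) \<le> g Y"
      proof (cases "Y \<in> stiefel d K")
        case False
        then show ?thesis using g_stiefel(2)[OF g_def False] by simp
      next
        case True
        define N where "N = frob_inner (Y - Q) (Y - Q)"
        have N0: "N \<ge> 0" unfolding N_def using Yc Qc by (auto simp: frob_inner_def intro!: sum_nonneg)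
        have fn: "frob_norm (Y - Q) = sqrt N" by (simp add: frob_norm_def N_def)
        have cd: "c * \<delta> \<le> \<epsilon>"
        proof -
          have "c * \<delta> = \<epsilon> * (c / (c + 1))" by (simp add: \<delta>_def)
          also have "\<dots> \<le> \<epsilon> * 1" using e c0 by (intro mult_left_mono) auto
          finally show ?thesis by simp
        qed
        have "c * N = c * sqrt N * sqrt N" using N0 by simp
        also have "\<dots> \<le> c * \<delta> * sqrt N"
          using n fn c0 N0 by (intro mult_right_mono mult_left_mono) auto
        also have "\<dots> \<le> \<epsilon> * sqrt N" using cd N0 by (intro mult_right_mono) auto
        finally have "c * N \<le> \<epsilon> * frob_norm (Y - Q)" using fn by simp
        moreover have "frob_inner A Y - frob_inner A Q \<ge> - c * N" using cb[OF True] by (simp add: N_def)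
        ultimately have "frob_inner A Q - \<epsilon> * frob_norm (Y - Q) \<le> frob_inner A Y" by linarith
        then show ?thesis using gQ g_stiefel(1)[OF g_def True] z0 by simp
      qed
    qed
  qed
  have fr: "0\<^sub>m d K \<in> frechet_subdiff d K g Q"
    unfolding frechet_subdiff_def using F Qc gQ by simp
  have n0: "frob_norm (Q - Q) = 0"
  proof -
    have "frob_inner (Q - Q) (Q - Q) = 0" using Qc by (simp add: frob_inner_def)
    then show ?thesis by (simp add: frob_norm_def)
  qed
  have n1: "frob_norm (0\<^sub>m d K - 0\<^sub>m d K) = 0"
  proof -
    have "frob_inner (0\<^sub>m d K - 0\<^sub>m d K) (0\<^sub>m d K - 0\<^sub>m d K) = 0" by (simp add: frob_inner_def)
    then show ?thesis by (simp add: frob_norm_def)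
  qed
  have ex: "\<exists>Xs Vs. (\<forall>k. Xs k \<in> carrier_mat d K \<and> Vs k \<in> frechet_subdiff d K g (Xs k)) \<and>
        (\<lambda>k. frob_norm (Xs k - Q)) \<longlonglongrightarrow> 0 \<and> (\<lambda>k. g (Xs k)) \<longlonglongrightarrow> g Q \<and>
        (\<lambda>k. frob_norm (Vs k - 0\<^sub>m d K)) \<longlonglongrightarrow> 0"
    by (rule exI[of _ "\<lambda>k. Q"], rule exI[of _ "\<lambda>k. 0\<^sub>m d K"]) (simp add: fr Qc n0 n1)
  show ?thesis unfolding limiting_subdiff_def using ex Qc gQ by simp
qed



lemma sum_block:
  fixes f :: "nat \<Rightarrow> 'a::comm_monoid_add"
  assumes "lo \<le> hi" "hi \<le> n" "\<And>k. k < n \<Longrightarrow> k < lo \<or> hi \<le> k \<Longrightarrow> f k = 0"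
  shows "(\<Sum>k<n. f k) = (\<Sum>k<hi - lo. f (lo + k))"
proof -
  have "(\<Sum>k<n. f k) = (\<Sum>k\<in>{lo..<hi}. f k)"
    by (rule sum.mono_neutral_right) (use assms in auto)
  also have "\<dots> = (\<Sum>k\<in>{0..<hi - lo}. f (lo + k))"
    by (subst sum.atLeastLessThan_shift_0) (simp add: comp_def)
  finally show ?thesis by (simp add: atLeast0LessThan)
qed

lemma UDUt_entry:
  assumes U: "U \<in> carrier_mat n n" and i: "i < n" and j: "j < n"
  shows "(U * diagm n q * U\<^sup>T) $$ (i,j) = (\<Sum>k<n. U$$(i,k) * q k * U$$(j,k))"
proof -
  have D: "diagm n q \<in> carrier_mat n n" by (simp add: diagm_def)
  have UD: "U * diagm n q \<in> carrier_mat n n" using U D by simp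
  have UDe: "(U * diagm n q) $$ (i,k) = U$$(i,k) * q k" if "k < n" for k
  proof -
    have "(U * diagm n q) $$ (i,k) = (\<Sum>l<n. U$$(i,l) * diagm n q $$ (l,k))"
      using mult_entry[OF U D i that] .
    also have "\<dots> = (\<Sum>l<n. if l = k then U$$(i,l) * q k else 0)"
      by (rule sum.cong) (use that in \<open>auto simp: diagm_def\<close>)
    also have "\<dots> = U$$(i,k) * q k" using that by simp
    finally show ?thesis .
  qed
  have "(U * diagm n q * U\<^sup>T) $$ (i,j) = (\<Sum>k<n. (U * diagm n q) $$ (i,k) * U\<^sup>T $$ (k,j))"
    using mult_entry[OF UD _ i j, of "U\<^sup>T"] U by simp
  also have "\<dots> = (\<Sum>k<n. U$$(i,k) * q k * U$$(j,k))"
    by (rule sum.cong) (use U j UDe in auto)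
  finally show ?thesis .
qed

locale setting =
  fixes d K r p :: nat and a :: "nat \<Rightarrow> real" and s :: "nat \<Rightarrow> nat" and A :: "real mat"
  assumes r1: "1 \<le> r" and rK: "r \<le> K" and Kd: "K \<le> d"
    and a_mono: "\<And>i. i + 1 < r \<Longrightarrow> a i \<ge> a (i + 1)"
    and a_pos: "a (r - 1) > 0"
    and A_def: "A = four_block_mat (diagm r a) (0\<^sub>m r (K - r)) (0\<^sub>m (d - r) r) (0\<^sub>m (d - r) (K - r))"
    and s0: "s 0 = 0" and sp: "s p = r"
    and s_mono: "\<And>i. i < p \<Longrightarrow> s i < s (i + 1)"
    and a_const: "\<And>i j. 1 \<le> i \<Longrightarrow> i \<le> p \<Longrightarrow> s (i - 1) \<le> j \<Longrightarrow> j < s i \<Longrightarrow> a j = a (s i - 1)"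
    and a_strict: "\<And>i. 1 \<le> i \<Longrightarrow> i < p \<Longrightarrow> a (s i - 1) > a (s (i + 1) - 1)"
begin

lemma apos_aux: "\<forall>i. i + n = r - 1 \<longrightarrow> a i \<ge> a (r - 1)"
proof (induction n)
  case 0 then show ?case by simp
next
  case (Suc n)
  show ?case
  proof (intro allI impI)
    fix i assume h: "i + Suc n = r - 1"
    then have h1: "(i + 1) + n = r - 1" and h2: "i + 1 < r" using r1 by auto
    have "a (i + 1) \<ge> a (r - 1)" using Suc.IH h1 by blast
    moreover have "a i \<ge> a (i + 1)" using a_mono[OF h2] .
    ultimately show "a i \<ge> a (r - 1)" by linarith
  qed
qed

lemma apos: "i < r \<Longrightarrow> a i > 0"
proof -
  assume i: "i < r"
  have "i + (r - 1 - i) = r - 1" using i by simp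
  then have "a i \<ge> a (r - 1)" using apos_aux[of "r - 1 - i"] by blast
  then show "a i > 0" using a_pos by simp
qed

lemma Ac: "A \<in> carrier_mat d K"
  using rK Kd unfolding A_def by (auto simp: diagm_def)

lemma Ae: "i < d \<Longrightarrow> l < K \<Longrightarrow> A $$ (i,l) = (if i < r \<and> l = i then a i else 0)"
  using rK Kd unfolding A_def by (auto simp: diagm_def)

lemma AX: "i < d \<Longrightarrow> (\<Sum>l<K. A$$(i,l) * X$$(j,l)) = (if i < r then a i * X$$(j,i) else 0)"
proof -
  assume i: "i < d"
  have "(\<Sum>l<K. A$$(i,l) * X$$(j,l)) = (\<Sum>l<K. if l = i \<and> i < r then a i * X$$(j,i) else 0)"
    by (rule sum.cong) (use i Ae in auto)
  also have "\<dots> = (if i < r then a i * X$$(j,i) else 0)" using rK by auto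
  finally show ?thesis .
qed

lemma critC_iff: "critC d K A X \<longleftrightarrow>
   (\<forall>i<d. \<forall>j<d. (if i < r then a i * X$$(j,i) else 0) = (if j < r then a j * X$$(i,j) else 0))"
  unfolding critC_def using AX by simp

lemma s_le: "\<forall>b<p. s b \<le> s (Suc b)" using s_mono by (simp add: less_imp_le)

lemma s_strict: "b < b' \<Longrightarrow> b' \<le> p \<Longrightarrow> s b < s b'"
proof (induction b')
  case 0 then show ?case by simp
next
  case (Suc b')
  then have "s b' < s (Suc b')" using s_mono[of b'] by simp
  then show ?case using Suc by (cases "b = b'") auto
qed

lemma s_mono': "b \<le> b' \<Longrightarrow> b' \<le> p \<Longrightarrow> s b \<le> s b'"
  using s_strict by (cases "b = b'") (auto simp: less_imp_le)

lemma p_pos: "p > 0" using s0 sp r1 by (cases p) auto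

lemma blk_ex: "i < r \<Longrightarrow> \<exists>b<p. s b \<le> i \<and> i < s (Suc b)"
proof -
  assume i: "i < r"
  have ex: "\<exists>b. i < s (Suc b) \<and> b < p" using i sp p_pos by (intro exI[of _ "p - 1"]) auto
  define b where "b = (LEAST b. i < s (Suc b) \<and> b < p)"
  have b1: "i < s (Suc b) \<and> b < p" unfolding b_def using LeastI_ex[OF ex] .
  have "s b \<le> i"
  proof (cases b)
    case 0 then show ?thesis using s0 by simp
  next
    case (Suc b'')
    have "\<not> (i < s (Suc b'') \<and> b'' < p)" using not_less_Least[of b'' "\<lambda>b. i < s (Suc b) \<and> b < p"] Suc
      unfolding b_def by simp
    then show ?thesis using b1 Suc by auto
  qed
  then show ?thesis using b1 by blast
qed

lemma blk_uniq: "b < p \<Longrightarrow> b' < p \<Longrightarrow> s b \<le> i \<Longrightarrow> i < s (Suc b) \<Longrightarrow> s b' \<le> i \<Longrightarrow> i < s (Suc b') \<Longrightarrow> b = b'"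
proof (rule ccontr)
  assume h: "b < p" "b' < p" "s b \<le> i" "i < s (Suc b)" "s b' \<le> i" "i < s (Suc b')" "b \<noteq> b'"
  show False
  proof (cases "b < b'")
    case True
    then have "s (Suc b) \<le> s b'" using s_mono'[of "Suc b" b'] h by simp
    then show False using h by simp
  next
    case False
    then have "b' < b" using h by simp
    then have "s (Suc b') \<le> s b" using s_mono'[of "Suc b'" b] h by simp
    then show False using h by simp
  qed
qed

definition blk :: "nat \<Rightarrow> nat" where
  "blk i = (THE b. b < p \<and> s b \<le> i \<and> i < s (Suc b))"

lemma blk: "i < r \<Longrightarrow> blk i < p \<and> s (blk i) \<le> i \<and> i < s (Suc (blk i))"
proof -
  assume i: "i < r"
  obtain b where b: "b < p \<and> s b \<le> i \<and> i < s (Suc b)" using blk_ex[OF i] by blast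
  have "blk i = b" unfolding blk_def
  proof (rule the_equality)
    show "b < p \<and> s b \<le> i \<and> i < s (Suc b)" by (rule b)
    fix b' assume "b' < p \<and> s b' \<le> i \<and> i < s (Suc b')"
    then show "b' = b" using blk_uniq[of b' b i] b by simp
  qed
  then show ?thesis using b by simp
qed

lemma blk_eq: "b < p \<Longrightarrow> s b \<le> i \<Longrightarrow> i < s (Suc b) \<Longrightarrow> blk i = b"
proof -
  assume b: "b < p" "s b \<le> i" "i < s (Suc b)"
  then have "i < r" using s_mono'[of "Suc b" p] sp by simp
  then have "blk i < p \<and> s (blk i) \<le> i \<and> i < s (Suc (blk i))" by (rule blk)
  then show "blk i = b" using blk_uniq[of "blk i" b i] b by simp
qed

definition alpha :: "nat \<Rightarrow> real" where "alpha b = a (s (Suc b) - 1)"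

lemma a_blk: "i < r \<Longrightarrow> a i = alpha (blk i)"
proof -
  assume i: "i < r"
  note bb = blk[OF i]
  show ?thesis unfolding alpha_def
    using a_const[of "Suc (blk i)" i] bb by simp
qed

lemma alpha_strict: "b < b' \<Longrightarrow> b' < p \<Longrightarrow> alpha b > alpha b'"
proof (induction b')
  case 0 then show ?case by simp
next
  case (Suc b')
  have "alpha b' > alpha (Suc b')" unfolding alpha_def
    using a_strict[of "Suc b'"] Suc.prems by simp
  then show ?case using Suc by (cases "b = b'") auto
qed

lemma a_eq_iff: "i < r \<Longrightarrow> j < r \<Longrightarrow> a i = a j \<longleftrightarrow> blk i = blk j"
proof -
  assume i: "i < r" and j: "j < r"
  show ?thesis
  proof
    assume "a i = a j"
    then have e: "alpha (blk i) = alpha (blk j)" using a_blk i j by simp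
    show "blk i = blk j"
    proof (rule ccontr)
      assume "blk i \<noteq> blk j"
      then have "blk i < blk j \<or> blk j < blk i" by auto
      moreover have "blk i < p" "blk j < p" using blk[OF i] blk[OF j] by auto
      ultimately have "alpha (blk i) \<noteq> alpha (blk j)"
        using alpha_strict[of "blk i" "blk j"] alpha_strict[of "blk j" "blk i"] by force
      then show False using e by simp
    qed
  next
    assume "blk i = blk j"
    then show "a i = a j" using a_blk i j by simp
  qed
qed

end



context setting begin

lemma crit_form:
  assumes Q: "Q \<in> stiefel d K" and C: "critC d K A Q"
  shows "\<exists>Us q V. length Us = p \<and> (\<forall>i<p. Us ! i \<in> stiefel (s (i+1) - s i) (s (i+1) - s i)) \<and>
       (\<forall>i<r. q i = 1 \<or> q i = -1) \<and> V \<in> stiefel (d - r) (K - r) \<and>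
       Q = four_block_mat (blkdiag Us * diagm r q * (blkdiag Us)\<^sup>T) (0\<^sub>m r (K - r)) (0\<^sub>m (d - r) r) V"
proof -
  have Qc: "Q \<in> carrier_mat d K" using Q by (simp add: stiefel_def)
  have rd: "r \<le> d" using rK Kd by simp
  have Cq: "(if i < r then a i * Q$$(j,i) else 0) = (if j < r then a j * Q$$(i,j) else 0)"
    if "i < d" "j < d" for i j
    using C that unfolding critC_iff by blast
  have z21: "Q$$(j,i) = 0" if i: "i < r" and j1: "r \<le> j" and j2: "j < d" for i j
  proof -
    have "a i * Q$$(j,i) = 0" using Cq[of i j] i j1 j2 rd by simp
    then show ?thesis using apos[OF i] by simp
  qed
  have sym11: "a i * Q$$(j,i) = a j * Q$$(i,j)" if "i < r" "j < r" for i j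
    using Cq[of i j] that rd by simp
  have oc: "(\<Sum>k<d. Q$$(k,l) * Q$$(k,m)) = (if l = m then 1 else 0)" if "l < K" "m < K" for l m
    using stiefel_entry[OF Q that] .
  have o11: "(\<Sum>k<r. Q$$(k,l) * Q$$(k,m)) = (if l = m then 1 else 0)" if l: "l < r" and m: "m < r" for l m
  proof -
    have "(\<Sum>k<d. Q$$(k,l) * Q$$(k,m)) = (\<Sum>k<r - 0. Q$$(0 + k,l) * Q$$(0 + k,m))"
      by (rule sum_block) (use rd l z21 in auto)
    then show ?thesis using oc[of l m] l m rK by simp
  qed
  define Q11 where "Q11 = mat r r (\<lambda>(i,j). Q$$(i,j))"
  have Q11c: "Q11 \<in> carrier_mat r r" by (simp add: Q11_def)
  have Q11s: "Q11 \<in> stiefel r r"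
  proof (rule stiefelI[OF Q11c])
    fix l m assume l: "l < r" and m: "m < r"
    have "(\<Sum>k<r. Q11$$(k,l) * Q11$$(k,m)) = (\<Sum>k<r. Q$$(k,l) * Q$$(k,m))"
      by (rule sum.cong) (use l m in \<open>auto simp: Q11_def\<close>)
    then show "(\<Sum>k<r. Q11$$(k,l) * Q11$$(k,m)) = (if l = m then 1 else 0)" using o11[OF l m] by simp
  qed
  have Q11i: "Q11 * Q11\<^sup>T = 1\<^sub>m r"
  proof -
    have "Q11\<^sup>T * Q11 = 1\<^sub>m r" using Q11s by (simp add: stiefel_def)
    then show ?thesis using mat_mult_left_right_inverse[of "Q11\<^sup>T" r Q11] Q11c by simp
  qed
  have rows: "(\<Sum>l<r. Q$$(i,l) * Q$$(j,l)) = (if i = j then 1 else 0)" if i: "i < r" and j: "j < r" for i j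
  proof -
    have "(Q11 * Q11\<^sup>T) $$ (i,j) = (\<Sum>l<r. Q11$$(i,l) * Q11\<^sup>T$$(l,j))"
      using mult_entry[of Q11 r r "Q11\<^sup>T" r i j] Q11c i j by simp
    also have "\<dots> = (\<Sum>l<r. Q$$(i,l) * Q$$(j,l))"
      by (rule sum.cong) (use i j in \<open>auto simp: Q11_def\<close>)
    finally show ?thesis using Q11i i j by simp
  qed
  have z12: "Q$$(k,m) = 0" if k: "k < r" and m1: "r \<le> m" and m2: "m < K" for k m
  proof -
    have col: "(\<Sum>k'<r. Q$$(k',l) * Q$$(k',m)) = 0" if l: "l < r" for l
    proof -
      have "(\<Sum>k<d. Q$$(k,l) * Q$$(k,m)) = (\<Sum>k<r - 0. Q$$(0+k,l) * Q$$(0+k,m))"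
        by (rule sum_block) (use rd l z21 in auto)
      then show ?thesis using oc[of l m] l m1 m2 rK by simp
    qed
    have "Q$$(k,m) = (\<Sum>k'<r. if k = k' then Q$$(k',m) else 0)" using k by simp
    also have "\<dots> = (\<Sum>k'<r. (\<Sum>l<r. Q$$(k,l) * Q$$(k',l)) * Q$$(k',m))"
      by (rule sum.cong) (use k rows in auto)
    also have "\<dots> = (\<Sum>l<r. Q$$(k,l) * (\<Sum>k'<r. Q$$(k',l) * Q$$(k',m)))"
      unfolding sum_distrib_left sum_distrib_right by (subst sum.swap) (simp add: mult_ac)
    also have "\<dots> = 0" by (simp add: col)
    finally show ?thesis .
  qed
  define V where "V = mat (d - r) (K - r) (\<lambda>(i,j). Q$$(i + r, j + r))"
  have Vc: "V \<in> carrier_mat (d - r) (K - r)" by (simp add: V_def)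
  have Vs: "V \<in> stiefel (d - r) (K - r)"
  proof (rule stiefelI[OF Vc])
    fix l m assume l: "l < K - r" and m: "m < K - r"
    have "(\<Sum>k<d. Q$$(k,l+r) * Q$$(k,m+r)) = (\<Sum>k<d - r. Q$$(r + k,l+r) * Q$$(r + k,m+r))"
      by (rule sum_block) (use rd l m z12 in auto)
    moreover have "(\<Sum>k<d - r. V$$(k,l) * V$$(k,m)) = (\<Sum>k<d - r. Q$$(r + k,l+r) * Q$$(r + k,m+r))"
      by (rule sum.cong) (use l m in \<open>auto simp: V_def add.commute\<close>)
    ultimately show "(\<Sum>k<d - r. V$$(k,l) * V$$(k,m)) = (if l = m then 1 else 0)"
      using oc[of "l+r" "m+r"] l m by simp
  qed
  have T2: "Q$$(i,m) * (a m)^2 = (a i)^2 * Q$$(i,m)" if i: "i < r" and m: "m < r" for i m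
  proof -
    have T1: "(\<Sum>k<r. Q$$(i,k) * (a k)^2 * Q$$(j,k)) = (if i = j then (a i)^2 else 0)" if j: "j < r" for j
    proof -
      have "(\<Sum>k<r. Q$$(i,k) * (a k)^2 * Q$$(j,k)) = (\<Sum>k<r. (a i * a j) * (Q$$(k,i) * Q$$(k,j)))"
      proof (rule sum.cong[OF refl])
        fix k assume "k \<in> {..<r}"
        then have k: "k < r" by simp
        have "Q$$(i,k) * (a k)^2 * Q$$(j,k) = (a k * Q$$(i,k)) * (a k * Q$$(j,k))"
          by (simp add: power2_eq_square mult_ac)
        also have "\<dots> = (a i * Q$$(k,i)) * (a j * Q$$(k,j))"
          using sym11[OF i k] sym11[OF j k] by simp
        finally show "Q$$(i,k) * (a k)^2 * Q$$(j,k) = (a i * a j) * (Q$$(k,i) * Q$$(k,j))"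
          by (simp add: mult_ac)
      qed
      also have "\<dots> = (a i * a j) * (if i = j then 1 else 0)"
        by (simp add: sum_distrib_left[symmetric] o11 i j)
      finally show ?thesis by (simp add: power2_eq_square)
    qed
    have "(\<Sum>j<r. (\<Sum>k<r. Q$$(i,k) * (a k)^2 * Q$$(j,k)) * Q$$(j,m)) = (\<Sum>j<r. if i = j then (a i)^2 * Q$$(j,m) else 0)"
      by (rule sum.cong) (auto simp: T1)
    also have "\<dots> = (a i)^2 * Q$$(i,m)" using i by simp
    finally have e1: "(\<Sum>j<r. (\<Sum>k<r. Q$$(i,k) * (a k)^2 * Q$$(j,k)) * Q$$(j,m)) = (a i)^2 * Q$$(i,m)" .
    have "(\<Sum>j<r. (\<Sum>k<r. Q$$(i,k) * (a k)^2 * Q$$(j,k)) * Q$$(j,m)) = (\<Sum>k<r. Q$$(i,k) * (a k)^2 * (\<Sum>j<r. Q$$(j,k) * Q$$(j,m)))"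
      unfolding sum_distrib_left sum_distrib_right by (subst sum.swap) (simp add: mult_ac)
    also have "\<dots> = (\<Sum>k<r. if k = m then Q$$(i,k) * (a k)^2 else 0)"
      by (rule sum.cong) (auto simp: o11 m)
    also have "\<dots> = Q$$(i,m) * (a m)^2" using m by simp
    finally have e2: "(\<Sum>j<r. (\<Sum>k<r. Q$$(i,k) * (a k)^2 * Q$$(j,k)) * Q$$(j,m)) = Q$$(i,m) * (a m)^2" .
    show ?thesis using e1 e2 by linarith
  qed
  have blkdiff: "Q$$(i,m) = 0" if i: "i < r" and m: "m < r" and b: "blk i \<noteq> blk m" for i m
  proof (rule ccontr)
    assume nz: "Q$$(i,m) \<noteq> 0"
    have "a i \<noteq> a m" using a_eq_iff[OF i m] b by simp
    moreover have "a i > 0" "a m > 0" using apos i m by auto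
    ultimately have "(a i)^2 \<noteq> (a m)^2" by (simp add: power2_eq_iff)
    moreover have "Q$$(i,m) * (a m)^2 = Q$$(i,m) * (a i)^2" using T2[OF i m] by (simp add: mult.commute)
    ultimately show False using nz by simp
  qed
  have blksym: "Q$$(i,j) = Q$$(j,i)" if i: "i < r" and j: "j < r" and b: "blk i = blk j" for i j
  proof -
    have e: "a i = a j" using a_eq_iff[OF i j] b by simp
    have "a j > 0" using apos[OF j] .
    then show ?thesis using sym11[OF i j] e by simp
  qed
  define hb where "hb b = s (Suc b) - s b" for b
  define Bm where "Bm b = mat (hb b) (hb b) (\<lambda>(i,j). Q$$(s b + i, s b + j))" for b
  have sr: "s (Suc b) \<le> r" if "b < p" for b using s_mono'[of "Suc b" p] that sp by simp
  have inblk: "s b + i < r \<and> blk (s b + i) = b" if b: "b < p" and i: "i < hb b" for b i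
  proof -
    have "s b + i < s (Suc b)" using i s_mono[of b] b by (simp add: hb_def)
    then show ?thesis using blk_eq[OF b, of "s b + i"] sr[OF b] by simp
  qed
  have outblk: "blk k \<noteq> b" if k: "k < r" and kb: "k < s b \<or> s (Suc b) \<le> k" for b k
    using blk[OF k] kb by auto
  have Bspec: "\<exists>U qq. U \<in> stiefel (hb b) (hb b) \<and> (\<forall>i<hb b. qq i = 1 \<or> qq i = -1) \<and>
      Bm b = U * diagm (hb b) qq * U\<^sup>T" if b: "b < p" for b
  proof (rule spectral_invol)
    show Bc: "Bm b \<in> carrier_mat (hb b) (hb b)" by (simp add: Bm_def)
    show "(Bm b)\<^sup>T = Bm b"
    proof (rule eq_matI)
      fix i j assume "i < dim_row (Bm b)" "j < dim_col (Bm b)"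
      then have i: "i < hb b" and j: "j < hb b" by (auto simp: Bm_def)
      show "(Bm b)\<^sup>T $$ (i,j) = Bm b $$ (i,j)"
        using i j blksym[of "s b + j" "s b + i"] inblk[OF b i] inblk[OF b j] by (simp add: Bm_def)
    qed (auto simp: Bm_def)
    show "(Bm b)\<^sup>T * Bm b = 1\<^sub>m (hb b)"
    proof (rule eq_matI)
      fix i j assume "i < dim_row (1\<^sub>m (hb b))" "j < dim_col (1\<^sub>m (hb b))"
      then have i: "i < hb b" and j: "j < hb b" by auto
      have "((Bm b)\<^sup>T * Bm b) $$ (i,j) = (\<Sum>k<hb b. (Bm b)\<^sup>T $$ (i,k) * Bm b $$ (k,j))"
        using mult_entry[of "(Bm b)\<^sup>T" "hb b" "hb b" "Bm b" "hb b" i j] Bc i j by simp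
      also have "\<dots> = (\<Sum>k<hb b. Q$$(s b + k, s b + i) * Q$$(s b + k, s b + j))"
        by (rule sum.cong) (use i j in \<open>auto simp: Bm_def\<close>)
      also have "\<dots> = (\<Sum>k<r. Q$$(k, s b + i) * Q$$(k, s b + j))"
      proof -
        have "(\<Sum>k<r. Q$$(k, s b + i) * Q$$(k, s b + j)) = (\<Sum>k<s (Suc b) - s b. Q$$(s b + k, s b + i) * Q$$(s b + k, s b + j))"
        proof (rule sum_block)
          show "s b \<le> s (Suc b)" using s_mono[of b] b by simp
          show "s (Suc b) \<le> r" using sr[OF b] .
          fix k assume k: "k < r" and kb: "k < s b \<or> s (Suc b) \<le> k"
          have "Q$$(k, s b + i) = 0" using blkdiff[of k "s b + i"] k inblk[OF b i] outblk[OF k kb] by simp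
          then show "Q$$(k, s b + i) * Q$$(k, s b + j) = 0" by simp
        qed
        then show ?thesis by (simp add: hb_def)
      qed
      also have "\<dots> = (if i = j then 1 else 0)" using o11 inblk[OF b i] inblk[OF b j] by simp
      finally show "((Bm b)\<^sup>T * Bm b) $$ (i,j) = 1\<^sub>m (hb b) $$ (i,j)" using i j by simp
    qed (auto simp: Bm_def)
  qed
  have "\<forall>b. \<exists>Uq. b < p \<longrightarrow> (fst Uq \<in> stiefel (hb b) (hb b) \<and> (\<forall>i<hb b. snd Uq i = 1 \<or> snd Uq i = -1) \<and>
      Bm b = fst Uq * diagm (hb b) (snd Uq) * (fst Uq)\<^sup>T)"
  proof
    fix b
    show "\<exists>Uq. b < p \<longrightarrow> (fst Uq \<in> stiefel (hb b) (hb b) \<and> (\<forall>i<hb b. snd Uq i = 1 \<or> snd Uq i = -1) \<and>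
      Bm b = fst Uq * diagm (hb b) (snd Uq) * (fst Uq)\<^sup>T)"
    proof (cases "b < p")
      case True
      then obtain U qq where "U \<in> stiefel (hb b) (hb b) \<and> (\<forall>i<hb b. qq i = 1 \<or> qq i = -1) \<and>
          Bm b = U * diagm (hb b) qq * U\<^sup>T" using Bspec by blast
      then show ?thesis by (intro exI[of _ "(U, qq)"]) simp
    qed simp
  qed
  then obtain F where F: "\<And>b. b < p \<Longrightarrow> fst (F b) \<in> stiefel (hb b) (hb b) \<and> (\<forall>i<hb b. snd (F b) i = 1 \<or> snd (F b) i = -1) \<and>
      Bm b = fst (F b) * diagm (hb b) (snd (F b)) * (fst (F b))\<^sup>T"
    by (metis choice)
  define Uf where "Uf b = fst (F b)" for b
  define qf where "qf b = snd (F b)" for b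
  have Ufs: "Uf b \<in> stiefel (hb b) (hb b)" if "b < p" for b using F[OF that] by (simp add: Uf_def)
  have Ufc: "Uf b \<in> carrier_mat (hb b) (hb b)" if "b < p" for b using Ufs[OF that] by (simp add: stiefel_def)
  have qfpm: "qf b i = 1 \<or> qf b i = -1" if "b < p" "i < hb b" for b i using F[OF that(1)] that(2) by (simp add: qf_def)
  have BmU: "Bm b = Uf b * diagm (hb b) (qf b) * (Uf b)\<^sup>T" if "b < p" for b
    using F[OF that] by (simp add: Uf_def qf_def)
  define Us where "Us = map Uf [0..<p]"
  define q where "q i = qf (blk i) (i - s (blk i))" for i
  have Usl: "length Us = p" by (simp add: Us_def)
  have Usn: "Us ! b = Uf b" if "b < p" for b using that by (simp add: Us_def)
  have BE: "blkdiag Us \<in> carrier_mat (s (length Us)) (s (length Us)) \<and>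
    (\<forall>b<length Us. \<forall>i j. s b \<le> i \<longrightarrow> i < s (Suc b) \<longrightarrow> j < s (length Us) \<longrightarrow>
       blkdiag Us $$ (i,j) = (if s b \<le> j \<and> j < s (Suc b) then Us!b $$ (i - s b, j - s b) else 0))"
  proof (rule blkdiag_entry)
    show "\<forall>b<length Us. Us ! b \<in> carrier_mat (s (Suc b) - s b) (s (Suc b) - s b)"
      using Ufc Usn Usl by (simp add: hb_def)
    show "\<forall>b<length Us. s b \<le> s (Suc b)" using s_le Usl by simp
    show "s 0 = 0" by (rule s0)
  qed
  define U where "U = blkdiag Us"
  have Uc: "U \<in> carrier_mat r r" using BE Usl sp by (simp add: U_def)
  have Ue: "U $$ (i,k) = (if blk k = blk i then Uf (blk i) $$ (i - s (blk i), k - s (blk i)) else 0)"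
    if i: "i < r" and k: "k < r" for i k
  proof -
    let ?b = "blk i"
    have bi: "?b < p" "s ?b \<le> i" "i < s (Suc ?b)" using blk[OF i] by auto
    have e: "U $$ (i,k) = (if s ?b \<le> k \<and> k < s (Suc ?b) then Us!?b $$ (i - s ?b, k - s ?b) else 0)"
      using BE bi k Usl sp unfolding U_def by simp
    have "(s ?b \<le> k \<and> k < s (Suc ?b)) = (blk k = ?b)"
      using blk[OF k] blk_eq[OF bi(1), of k] by auto
    then show ?thesis using e Usn[OF bi(1)] by simp
  qed
  have main: "(U * diagm r q * U\<^sup>T) $$ (i,j) = Q $$ (i,j)" if i: "i < r" and j: "j < r" for i j
  proof -
    have e0: "(U * diagm r q * U\<^sup>T) $$ (i,j) = (\<Sum>k<r. U$$(i,k) * q k * U$$(j,k))"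
      by (rule UDUt_entry[OF Uc i j])
    show ?thesis
    proof (cases "blk i = blk j")
      case False
      have "(\<Sum>k<r. U$$(i,k) * q k * U$$(j,k)) = 0"
      proof (rule sum.neutral, rule ballI)
        fix k assume "k \<in> {..<r}"
        then have k: "k < r" by simp
        show "U$$(i,k) * q k * U$$(j,k) = 0"
          using Ue[OF i k] Ue[OF j k] False by auto
      qed
      then show ?thesis using e0 blkdiff[OF i j False] by simp
    next
      case True
      define b where "b = blk i"
      have bi: "b < p" "s b \<le> i" "i < s (Suc b)" using blk[OF i] by (auto simp: b_def)
      have bj: "blk j = b" using True by (simp add: b_def)
      have bj': "s b \<le> j" "j < s (Suc b)" using blk[OF j] bj by auto
      have "(\<Sum>k<r. U$$(i,k) * q k * U$$(j,k)) = (\<Sum>k<s (Suc b) - s b. U$$(i,s b + k) * q (s b + k) * U$$(j,s b + k))"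
      proof (rule sum_block)
        show "s b \<le> s (Suc b)" using bi by simp
        show "s (Suc b) \<le> r" using sr[OF bi(1)] .
        fix k assume k: "k < r" and kb: "k < s b \<or> s (Suc b) \<le> k"
        have "blk k \<noteq> blk i" using outblk[OF k kb] by (simp add: b_def)
        then show "U$$(i,k) * q k * U$$(j,k) = 0" using Ue[OF i k] by simp
      qed
      also have "\<dots> = (\<Sum>k<hb b. Uf b $$ (i - s b, k) * qf b k * Uf b $$ (j - s b, k))"
      proof (rule sum.cong)
        show "{..<s (Suc b) - s b} = {..<hb b}" by (simp add: hb_def)
        fix k assume "k \<in> {..<hb b}"
        then have k: "k < hb b" by simp
        note kk = inblk[OF bi(1) k]
        show "U$$(i,s b + k) * q (s b + k) * U$$(j,s b + k) = Uf b $$ (i - s b, k) * qf b k * Uf b $$ (j - s b, k)"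
          using Ue[OF i, of "s b + k"] Ue[OF j, of "s b + k"] kk bj by (simp add: q_def b_def)
      qed
      also have "\<dots> = (Uf b * diagm (hb b) (qf b) * (Uf b)\<^sup>T) $$ (i - s b, j - s b)"
        by (rule UDUt_entry[symmetric, OF Ufc[OF bi(1)]]) (use bi bj' in \<open>auto simp: hb_def\<close>)
      also have "\<dots> = Bm b $$ (i - s b, j - s b)" using BmU[OF bi(1)] by simp
      also have "\<dots> = Q $$ (i,j)" using bi bj' by (simp add: Bm_def hb_def)
      finally show ?thesis using e0 by simp
    qed
  qed
  have qpm: "\<forall>i<r. q i = 1 \<or> q i = -1"
  proof (intro allI impI)
    fix i assume i: "i < r"
    have "blk i < p" "i - s (blk i) < hb (blk i)" using blk[OF i] by (auto simp: hb_def)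
    then show "q i = 1 \<or> q i = -1" unfolding q_def by (rule qfpm)
  qed
  have Usst: "\<forall>i<p. Us ! i \<in> stiefel (s (i+1) - s i) (s (i+1) - s i)"
    using Ufs Usn by (simp add: hb_def)
  have UDc: "U * diagm r q * U\<^sup>T \<in> carrier_mat r r" using Uc unfolding carrier_mat_def by simp
  have Qeq: "Q = four_block_mat (U * diagm r q * U\<^sup>T) (0\<^sub>m r (K - r)) (0\<^sub>m (d - r) r) V"
  proof (rule eq_matI)
    show "dim_row Q = dim_row (four_block_mat (U * diagm r q * U\<^sup>T) (0\<^sub>m r (K - r)) (0\<^sub>m (d - r) r) V)"
      using Qc UDc Vc rd Uc by simp
    show "dim_col Q = dim_col (four_block_mat (U * diagm r q * U\<^sup>T) (0\<^sub>m r (K - r)) (0\<^sub>m (d - r) r) V)"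
      using Qc UDc Vc rK Uc by simp
    fix i j assume "i < dim_row (four_block_mat (U * diagm r q * U\<^sup>T) (0\<^sub>m r (K - r)) (0\<^sub>m (d - r) r) V)"
      "j < dim_col (four_block_mat (U * diagm r q * U\<^sup>T) (0\<^sub>m r (K - r)) (0\<^sub>m (d - r) r) V)"
    then have i: "i < d" and j: "j < K" using UDc Vc rd rK Uc by auto
    have ir: "i < r + (d - r)" and jr: "j < r + (K - r)" using i j rd rK by auto
    have fb: "four_block_mat (U * diagm r q * U\<^sup>T) (0\<^sub>m r (K - r)) (0\<^sub>m (d - r) r) V $$ (i,j) =
      (if i < r then if j < r then (U * diagm r q * U\<^sup>T) $$ (i,j) else 0
       else if j < r then 0 else V $$ (i - r, j - r))"
      using ir jr UDc Vc by (auto simp: index_mat_four_block)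
    show "Q $$ (i,j) = four_block_mat (U * diagm r q * U\<^sup>T) (0\<^sub>m r (K - r)) (0\<^sub>m (d - r) r) V $$ (i,j)"
    proof (cases "i < r"; cases "j < r")
      assume "i < r" "j < r" then show ?thesis using main fb by simp
    next
      assume "i < r" "\<not> j < r" then show ?thesis using z12 j fb by simp
    next
      assume "\<not> i < r" "j < r" then show ?thesis using z21 i fb by simp
    next
      assume "\<not> i < r" "\<not> j < r" then show ?thesis using i j fb rd rK by (simp add: V_def)
    qed
  qed
  show ?thesis
    by (intro exI[of _ Us] exI[of _ q] exI[of _ V] conjI Usl Usst qpm Vs) (simp add: Qeq U_def)
qed

end


context setting begin

lemma form_crit:
  assumes Usl: "length Us = p" and Uss: "\<forall>i<p. Us ! i \<in> stiefel (s (i+1) - s i) (s (i+1) - s i)"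
    and qpm: "\<forall>i<r. q i = 1 \<or> q i = -1" and Vs: "V \<in> stiefel (d - r) (K - r)"
    and Qeq: "Q = four_block_mat (blkdiag Us * diagm r q * (blkdiag Us)\<^sup>T) (0\<^sub>m r (K - r)) (0\<^sub>m (d - r) r) V"
  shows "Q \<in> stiefel d K \<and> critC d K A Q"
proof -
  have rd: "r \<le> d" using rK Kd by simp
  define hb where "hb b = s (Suc b) - s b" for b
  have sr: "s (Suc b) \<le> r" if "b < p" for b using s_mono'[of "Suc b" p] that sp by simp
  have inblk: "s b + i < r \<and> blk (s b + i) = b" if b: "b < p" and i: "i < hb b" for b i
  proof -
    have "s b + i < s (Suc b)" using i s_mono[of b] b by (simp add: hb_def)
    then show ?thesis using blk_eq[OF b, of "s b + i"] sr[OF b] by simp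
  qed
  have outblk: "blk k \<noteq> b" if k: "k < r" and kb: "k < s b \<or> s (Suc b) \<le> k" for b k
    using blk[OF k] kb by auto
  have Usc: "Us ! b \<in> carrier_mat (hb b) (hb b)" if "b < p" for b
    using Uss that by (simp add: stiefel_def hb_def)
  have BE: "blkdiag Us \<in> carrier_mat (s (length Us)) (s (length Us)) \<and>
    (\<forall>b<length Us. \<forall>i j. s b \<le> i \<longrightarrow> i < s (Suc b) \<longrightarrow> j < s (length Us) \<longrightarrow>
       blkdiag Us $$ (i,j) = (if s b \<le> j \<and> j < s (Suc b) then Us!b $$ (i - s b, j - s b) else 0))"
  proof (rule blkdiag_entry)
    show "\<forall>b<length Us. Us ! b \<in> carrier_mat (s (Suc b) - s b) (s (Suc b) - s b)"
      using Usc Usl by (simp add: hb_def)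
    show "\<forall>b<length Us. s b \<le> s (Suc b)" using s_le Usl by simp
    show "s 0 = 0" by (rule s0)
  qed
  define U where "U = blkdiag Us"
  have Uc: "U \<in> carrier_mat r r" using BE Usl sp by (simp add: U_def)
  have Ue: "U $$ (i,k) = (if blk k = blk i then Us ! (blk i) $$ (i - s (blk i), k - s (blk i)) else 0)"
    if i: "i < r" and k: "k < r" for i k
  proof -
    let ?b = "blk i"
    have bi: "?b < p" "s ?b \<le> i" "i < s (Suc ?b)" using blk[OF i] by auto
    have e: "U $$ (i,k) = (if s ?b \<le> k \<and> k < s (Suc ?b) then Us!?b $$ (i - s ?b, k - s ?b) else 0)"
      using BE bi k Usl sp unfolding U_def by simp
    have "(s ?b \<le> k \<and> k < s (Suc ?b)) = (blk k = ?b)"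
      using blk[OF k] blk_eq[OF bi(1), of k] by auto
    then show ?thesis using e by simp
  qed
  have UtU: "(\<Sum>k<r. U$$(k,i) * U$$(k,j)) = (if i = j then 1 else 0)" if i: "i < r" and j: "j < r" for i j
  proof (cases "blk i = blk j")
    case False
    then have ij: "i \<noteq> j" by auto
    have "(\<Sum>k<r. U$$(k,i) * U$$(k,j)) = 0"
    proof (rule sum.neutral, rule ballI)
      fix k assume "k \<in> {..<r}"
      then have k: "k < r" by simp
      show "U$$(k,i) * U$$(k,j) = 0" using Ue[OF k i] Ue[OF k j] False by auto
    qed
    then show ?thesis using ij by simp
  next
    case True
    define b where "b = blk i"
    have bi: "b < p" "s b \<le> i" "i < s (Suc b)" using blk[OF i] by (auto simp: b_def)
    have bj: "blk j = b" using True by (simp add: b_def)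
    have bj': "s b \<le> j" "j < s (Suc b)" using blk[OF j] bj by auto
    have "(\<Sum>k<r. U$$(k,i) * U$$(k,j)) = (\<Sum>k<s (Suc b) - s b. U$$(s b + k,i) * U$$(s b + k,j))"
    proof (rule sum_block)
      show "s b \<le> s (Suc b)" using bi by simp
      show "s (Suc b) \<le> r" using sr[OF bi(1)] .
      fix k assume k: "k < r" and kb: "k < s b \<or> s (Suc b) \<le> k"
      have "blk k \<noteq> blk i" using outblk[OF k kb] by (simp add: b_def)
      then show "U$$(k,i) * U$$(k,j) = 0" using Ue[OF k i] by simp
    qed
    also have "\<dots> = (\<Sum>k<hb b. Us!b $$ (k, i - s b) * Us!b $$ (k, j - s b))"
    proof (rule sum.cong)
      show "{..<s (Suc b) - s b} = {..<hb b}" by (simp add: hb_def)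
      fix k assume "k \<in> {..<hb b}"
      then have k: "k < hb b" by simp
      note kk = inblk[OF bi(1) k]
      show "U$$(s b + k,i) * U$$(s b + k,j) = Us!b $$ (k, i - s b) * Us!b $$ (k, j - s b)"
        using Ue[of "s b + k" i] Ue[of "s b + k" j] kk i j bj by (simp add: b_def)
    qed
    also have "\<dots> = (if i - s b = j - s b then 1 else 0)"
      using stiefel_entry[of "Us!b" "hb b" "hb b" "i - s b" "j - s b"] Uss bi bj' by (simp add: hb_def)
    also have "\<dots> = (if i = j then 1 else 0)" using bi bj' by auto
    finally show ?thesis .
  qed
  have UtU1: "U\<^sup>T * U = 1\<^sub>m r"
  proof (rule eq_matI)
    fix i j assume "i < dim_row (1\<^sub>m r)" "j < dim_col (1\<^sub>m r)"
    then have i: "i < r" and j: "j < r" by auto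
    have "(U\<^sup>T * U) $$ (i,j) = (\<Sum>k<r. U\<^sup>T $$ (i,k) * U $$ (k,j))"
      using mult_entry[of "U\<^sup>T" r r U r i j] Uc i j by simp
    also have "\<dots> = (\<Sum>k<r. U$$(k,i) * U$$(k,j))" using Uc i by simp
    finally show "(U\<^sup>T * U) $$ (i,j) = 1\<^sub>m r $$ (i,j)" using UtU[OF i j] i j by simp
  qed (use Uc in auto)
  have UUt1: "U * U\<^sup>T = 1\<^sub>m r" using mat_mult_left_right_inverse[of "U\<^sup>T" r U] Uc UtU1 by simp
  have UUt: "(\<Sum>k<r. U$$(i,k) * U$$(j,k)) = (if i = j then 1 else 0)" if i: "i < r" and j: "j < r" for i j
  proof -
    have "(U * U\<^sup>T) $$ (i,j) = (\<Sum>k<r. U $$ (i,k) * U\<^sup>T $$ (k,j))"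
      using mult_entry[of U r r "U\<^sup>T" r i j] Uc i j by simp
    also have "\<dots> = (\<Sum>k<r. U$$(i,k) * U$$(j,k))" using Uc j by simp
    finally show ?thesis using UUt1 i j by simp
  qed
  define M where "M = U * diagm r q * U\<^sup>T"
  have Mc: "M \<in> carrier_mat r r" using Uc unfolding M_def carrier_mat_def by simp
  have Me: "M $$ (i,j) = (\<Sum>k<r. U$$(i,k) * q k * U$$(j,k))" if "i < r" "j < r" for i j
    unfolding M_def by (rule UDUt_entry[OF Uc that])
  have Msym: "M $$ (i,j) = M $$ (j,i)" if "i < r" "j < r" for i j
    using Me[of i j] Me[of j i] that by (simp add: mult_ac)
  have Mblk: "M $$ (i,j) = 0" if i: "i < r" and j: "j < r" and b: "blk i \<noteq> blk j" for i j
  proof -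
    have "(\<Sum>k<r. U$$(i,k) * q k * U$$(j,k)) = 0"
    proof (rule sum.neutral, rule ballI)
      fix k assume "k \<in> {..<r}"
      then have k: "k < r" by simp
      show "U$$(i,k) * q k * U$$(j,k) = 0" using Ue[OF i k] Ue[OF j k] b by auto
    qed
    then show ?thesis using Me[OF i j] by simp
  qed
  have MtM: "(\<Sum>k<r. M$$(k,i) * M$$(k,j)) = (if i = j then 1 else 0)" if i: "i < r" and j: "j < r" for i j
  proof -
    have "(\<Sum>k<r. M$$(k,i) * M$$(k,j)) = (\<Sum>k<r. \<Sum>a<r. \<Sum>b<r. (q a * U$$(i,a)) * (q b * U$$(j,b)) * (U$$(k,a) * U$$(k,b)))"
    proof (rule sum.cong[OF refl])
      fix k assume "k \<in> {..<r}"
      then have k: "k < r" by simp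
      have "M$$(k,i) * M$$(k,j) = (\<Sum>a<r. U$$(k,a) * q a * U$$(i,a)) * (\<Sum>b<r. U$$(k,b) * q b * U$$(j,b))"
        using Me[OF k i] Me[OF k j] by simp
      also have "\<dots> = (\<Sum>a<r. \<Sum>b<r. (U$$(k,a) * q a * U$$(i,a)) * (U$$(k,b) * q b * U$$(j,b)))"
        by (rule sum_product)
      also have "\<dots> = (\<Sum>a<r. \<Sum>b<r. (q a * U$$(i,a)) * (q b * U$$(j,b)) * (U$$(k,a) * U$$(k,b)))"
        by (simp add: mult_ac)
      finally show "M$$(k,i) * M$$(k,j) = (\<Sum>a<r. \<Sum>b<r. (q a * U$$(i,a)) * (q b * U$$(j,b)) * (U$$(k,a) * U$$(k,b)))" .
    qed
    also have "\<dots> = (\<Sum>a<r. \<Sum>k<r. \<Sum>b<r. (q a * U$$(i,a)) * (q b * U$$(j,b)) * (U$$(k,a) * U$$(k,b)))"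
      by (rule sum.swap)
    also have "\<dots> = (\<Sum>a<r. \<Sum>b<r. \<Sum>k<r. (q a * U$$(i,a)) * (q b * U$$(j,b)) * (U$$(k,a) * U$$(k,b)))"
      by (rule sum.cong[OF refl]) (rule sum.swap)
    also have "\<dots> = (\<Sum>a<r. \<Sum>b<r. (q a * U$$(i,a)) * (q b * U$$(j,b)) * (if a = b then 1 else 0))"
      by (rule sum.cong[OF refl])+ (simp add: sum_distrib_left[symmetric] UtU)
    also have "\<dots> = (\<Sum>a<r. U$$(i,a) * U$$(j,a))"
    proof (rule sum.cong[OF refl])
      fix a assume "a \<in> {..<r}"
      then have a: "a < r" by simp
      have "q a * q a = 1" using qpm a by auto
      have "(\<Sum>b<r. (q a * U$$(i,a)) * (q b * U$$(j,b)) * (if a = b then 1 else 0))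
          = (\<Sum>b<r. if a = b then (q a * U$$(i,a)) * (q b * U$$(j,b)) else 0)"
        by (rule sum.cong) auto
      also have "\<dots> = (q a * q a) * (U$$(i,a) * U$$(j,a))" using a by (simp add: mult_ac)
      finally show "(\<Sum>b<r. (q a * U$$(i,a)) * (q b * U$$(j,b)) * (if a = b then 1 else 0)) = U$$(i,a) * U$$(j,a)"
        using \<open>q a * q a = 1\<close> by simp
    qed
    also have "\<dots> = (if i = j then 1 else 0)" using UUt[OF i j] .
    finally show ?thesis .
  qed
  have Vc: "V \<in> carrier_mat (d - r) (K - r)" using Vs by (simp add: stiefel_def)
  have Qeq': "Q = four_block_mat M (0\<^sub>m r (K - r)) (0\<^sub>m (d - r) r) V"
    using Qeq unfolding M_def U_def .
  have Mr: "dim_row M = r" "dim_col M = r" using Mc by auto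
  have Vr: "dim_row V = d - r" "dim_col V = K - r" using Vc by auto
  have Qc: "Q \<in> carrier_mat d K"
  proof -
    have "four_block_mat M (0\<^sub>m r (K - r)) (0\<^sub>m (d - r) r) V \<in> carrier_mat (r + (d - r)) (r + (K - r))"
      by (rule four_block_carrier_mat[OF Mc Vc])
    then show ?thesis using Qeq' rd rK by simp
  qed
  have Qe: "Q $$ (i,j) = (if i < r then if j < r then M $$ (i,j) else 0 else if j < r then 0 else V $$ (i - r, j - r))"
    if i: "i < d" and j: "j < K" for i j
  proof -
    have ir: "i < dim_row M + dim_row V" and jr: "j < dim_col M + dim_col V" using i j rd rK Mr Vr by auto
    have "Q $$ (i,j) = (if i < dim_row M then if j < dim_col M then M $$ (i,j) else (0\<^sub>m r (K - r)) $$ (i, j - dim_col M)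
      else if j < dim_col M then (0\<^sub>m (d - r) r) $$ (i - dim_row M, j) else V $$ (i - dim_row M, j - dim_col M))"
      unfolding Qeq' by (rule index_mat_four_block(1)[OF ir jr])
    then show ?thesis using i j rd rK unfolding Mr by auto
  qed
  have Qst: "Q \<in> stiefel d K"
  proof (rule stiefelI[OF Qc])
    fix l m assume l: "l < K" and m: "m < K"
    show "(\<Sum>k<d. Q$$(k,l) * Q$$(k,m)) = (if l = m then 1 else 0)"
    proof (cases "l < r"; cases "m < r")
      assume lr: "l < r" and mr: "m < r"
      have "(\<Sum>k<d. Q$$(k,l) * Q$$(k,m)) = (\<Sum>k<r - 0. Q$$(0 + k,l) * Q$$(0 + k,m))"
        by (rule sum_block) (use rd lr l m Qe in auto)
      also have "\<dots> = (\<Sum>k<r. M$$(k,l) * M$$(k,m))"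
        by (rule sum.cong) (use lr mr l m rd Qe in auto)
      finally show ?thesis using MtM[OF lr mr] by simp
    next
      assume lr: "l < r" and mr: "\<not> m < r"
      have "(\<Sum>k<d. Q$$(k,l) * Q$$(k,m)) = 0"
        by (rule sum.neutral) (use lr mr l m Qe in auto)
      then show ?thesis using lr mr by auto
    next
      assume lr: "\<not> l < r" and mr: "m < r"
      have "(\<Sum>k<d. Q$$(k,l) * Q$$(k,m)) = 0"
        by (rule sum.neutral) (use lr mr l m Qe in auto)
      then show ?thesis using lr mr by auto
    next
      assume lr: "\<not> l < r" and mr: "\<not> m < r"
      have "(\<Sum>k<d. Q$$(k,l) * Q$$(k,m)) = (\<Sum>k<d - r. Q$$(r + k,l) * Q$$(r + k,m))"
        by (rule sum_block) (use rd lr l m Qe in auto)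
      also have "\<dots> = (\<Sum>k<d - r. V$$(k,l - r) * V$$(k,m - r))"
        by (rule sum.cong) (use lr mr l m rd Qe in auto)
      also have "\<dots> = (if l - r = m - r then 1 else 0)"
        using stiefel_entry[OF Vs, of "l - r" "m - r"] l m lr mr by simp
      finally show ?thesis using lr mr by auto
    qed
  qed
  have Qcrit: "critC d K A Q"
    unfolding critC_iff
  proof (intro allI impI)
    fix i j assume i: "i < d" and j: "j < d"
    show "(if i < r then a i * Q$$(j,i) else 0) = (if j < r then a j * Q$$(i,j) else 0)"
    proof (cases "i < r"; cases "j < r")
      assume ir: "i < r" and jr: "j < r"
      have iK: "i < K" and jK: "j < K" using ir jr rK by auto
      show ?thesis
      proof (cases "blk i = blk j")
        case True
        then have "a i = a j" using a_eq_iff[OF ir jr] by simp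
        then show ?thesis using ir jr Qe[OF i jK] Qe[OF j iK] Msym[OF ir jr] by simp
      next
        case False
        then show ?thesis using ir jr Qe[OF i jK] Qe[OF j iK] Mblk[OF ir jr] Mblk[OF jr ir] by auto
      qed
    next
      assume ir: "i < r" and jr: "\<not> j < r"
      have iK: "i < K" using ir rK by auto
      show ?thesis using ir jr Qe[OF j iK] by simp
    next
      assume ir: "\<not> i < r" and jr: "j < r"
      have jK: "j < K" using jr rK by auto
      show ?thesis using ir jr Qe[OF i jK] by simp
    next
      assume "\<not> i < r" "\<not> j < r"
      then show ?thesis by simp
    qed
  qed
  show ?thesis using Qst Qcrit by simp
qed

end

theorem proposition2:
  fixes d K r p :: nat and a :: "nat \<Rightarrow> real" and s :: "nat \<Rightarrow> nat"
    and A Q :: "real mat" and g :: "real mat \<Rightarrow> ereal" and h :: "nat \<Rightarrow> nat"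
  assumes "1 \<le> r" "r \<le> K" "K \<le> d"
    and a_mono: "\<And>i. i + 1 < r \<Longrightarrow> a i \<ge> a (i + 1)"
    and a_pos: "a (r - 1) > 0"
    and A_def: "A = four_block_mat (diagm r a) (0\<^sub>m r (K - r)) (0\<^sub>m (d - r) r) (0\<^sub>m (d - r) (K - r))"
    and s0: "s 0 = 0" and sp: "s p = r"
    and s_mono: "\<And>i. i < p \<Longrightarrow> s i < s (i + 1)"
    and a_const: "\<And>i j. 1 \<le> i \<Longrightarrow> i \<le> p \<Longrightarrow> s (i - 1) \<le> j \<Longrightarrow> j < s i \<Longrightarrow> a j = a (s i - 1)"
    and a_strict: "\<And>i. 1 \<le> i \<Longrightarrow> i < p \<Longrightarrow> a (s i - 1) > a (s (i + 1) - 1)"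
    and h_def: "\<And>i. h i = s i - s (i - 1)"
    and g_def: "\<And>X. g X = ereal (frob_inner A X) + indicator_fun (stiefel d K) X"
    and Q_dim: "Q \<in> carrier_mat d K"
  shows "Q \<in> {X \<in> stiefel d K. 0\<^sub>m d K \<in> limiting_subdiff d K g X} \<longleftrightarrow>
    (\<exists>Us q V. length Us = p \<and> (\<forall>i<p. Us ! i \<in> stiefel (h (i + 1)) (h (i + 1))) \<and>
       (\<forall>i<r. q i = 1 \<or> q i = -1) \<and> V \<in> stiefel (d - r) (K - r) \<and>
       Q = four_block_mat (blkdiag Us * diagm r q * (blkdiag Us)\<^sup>T)
             (0\<^sub>m r (K - r)) (0\<^sub>m (d - r) r) V)"
proof -
  interpret setting d K r p a s A
    by (rule setting.intro[OF assms(1-11)])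
  have hs: "h (i + 1) = s (i + 1) - s i" for i using h_def[of "i + 1"] by simp
  show ?thesis
  proof
    assume "Q \<in> {X \<in> stiefel d K. 0\<^sub>m d K \<in> limiting_subdiff d K g X}"
    then have Qs: "Q \<in> stiefel d K" and L: "0\<^sub>m d K \<in> limiting_subdiff d K g Q" by auto
    have C: "critC d K A Q" by (rule critical_imp_C[OF g_def Ac Q_dim L])
    show "\<exists>Us q V. length Us = p \<and> (\<forall>i<p. Us ! i \<in> stiefel (h (i + 1)) (h (i + 1))) \<and>
       (\<forall>i<r. q i = 1 \<or> q i = -1) \<and> V \<in> stiefel (d - r) (K - r) \<and>
       Q = four_block_mat (blkdiag Us * diagm r q * (blkdiag Us)\<^sup>T)
             (0\<^sub>m r (K - r)) (0\<^sub>m (d - r) r) V"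
      using crit_form[OF Qs C] unfolding hs .
  next
    assume "\<exists>Us q V. length Us = p \<and> (\<forall>i<p. Us ! i \<in> stiefel (h (i + 1)) (h (i + 1))) \<and>
       (\<forall>i<r. q i = 1 \<or> q i = -1) \<and> V \<in> stiefel (d - r) (K - r) \<and>
       Q = four_block_mat (blkdiag Us * diagm r q * (blkdiag Us)\<^sup>T)
             (0\<^sub>m r (K - r)) (0\<^sub>m (d - r) r) V"
    then obtain Us q V where Usl: "length Us = p" and Uss: "\<forall>i<p. Us ! i \<in> stiefel (h (i + 1)) (h (i + 1))"
      and qpm: "\<forall>i<r. q i = 1 \<or> q i = -1" and Vs: "V \<in> stiefel (d - r) (K - r)"
      and Qeq: "Q = four_block_mat (blkdiag Us * diagm r q * (blkdiag Us)\<^sup>T) (0\<^sub>m r (K - r)) (0\<^sub>m (d - r) r) V"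
      by blast
    have Uss': "\<forall>i<p. Us ! i \<in> stiefel (s (i+1) - s i) (s (i+1) - s i)" using Uss unfolding hs .
    have QC: "Q \<in> stiefel d K \<and> critC d K A Q" by (rule form_crit[OF Usl Uss' qpm Vs Qeq])
    then have "0\<^sub>m d K \<in> limiting_subdiff d K g Q"
      using C_imp_limiting[OF g_def Ac] by blast
    then show "Q \<in> {X \<in> stiefel d K. 0\<^sub>m d K \<in> limiting_subdiff d K g X}" using QC by simp
  qed
qed

end
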